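(* Let $d\ge2$ and $0\le N\le d$. Define the restricted Haar ensemble $\mathcal U_{\rm RH}$ as the distribution of the $d\times d$ unitary $U=\begin{pmatrix}Q&0\\0&V\end{pmatrix}$, where $Q=\mathrm{diag}(e^{i\phi_1},\dots,e^{i\phi_N})$ with $\phi_1,\dots,\phi_N$ i.i.d. uniform on $[0,2\pi)$, and $V$ is Haar-distributed on $U(d-N)$ independent of $Q$ (for $N=d-1$, $V=e^{i\phi}$ with $\phi$ uniform on $[0,2\pi)$; for $N=d$ the block $V$ is absent). Let $\mathcal F^{(2)}_{\rm RH}=\mathbb E\,|\operatorname{tr}(U^\dagger U')|^4$ with $U,U'$ independent draws from $\mathcal U_{\rm RH}$. Then $$\mathcal F^{(2)}_{\rm RH}=\begin{cases}2N^2+3N+2,& 0\le N\le d-2,\\ 2d^2-d,& N\in\{d-1,d\}.\end{cases}$$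
   Context: The $k$-th frame potential of an ensemble $\mathcal U$ of unitaries is $\mathcal F^{(k)}_{\mathcal U}=\int_{\mathcal U}dU\,dU'\,|\operatorname{tr}(U^\dagger U')|^{2k}$ with $U,U'$ independent; for the Haar ensemble on $U(m)$ with $m\ge k$ it equals $k!$. The block structure is with respect to a basis in which the first $N$ basis vectors correspond to the $N$ orthogonal input/target data states. *)

theory Defs
  imports "HOL-Probability.Probability"
begin

text \<open>Square complex matrices of variable size m are represented as functions
  nat => nat => complex; only the entries with indices below m are meaningful.\<close>

type_synonym cmat = "nat \<Rightarrow> nat \<Rightarrow> complex"

definition matspace :: "cmat measure" where
  "matspace = PiM UNIV (\<lambda>_. PiM UNIV (\<lambda>_. borel))"

definition mmult :: "nat \<Rightarrow> cmat \<Rightarrow> cmat \<Rightarrow> cmat" where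
  "mmult m A B = (\<lambda>i j. if i < m \<and> j < m then (\<Sum>k<m. A i k * B k j) else 0)"

definition madj :: "nat \<Rightarrow> cmat \<Rightarrow> cmat" where
  "madj m A = (\<lambda>i j. if i < m \<and> j < m then cnj (A j i) else 0)"

definition mone :: "nat \<Rightarrow> cmat" where
  "mone m = (\<lambda>i j. if i < m \<and> i = j then 1 else 0)"

definition mtrace :: "nat \<Rightarrow> cmat \<Rightarrow> complex" where
  "mtrace m A = (\<Sum>i<m. A i i)"

definition unitary_mat :: "nat \<Rightarrow> cmat \<Rightarrow> bool" where
  "unitary_mat m V \<longleftrightarrow> (\<forall>i j. \<not> (i < m \<and> j < m) \<longrightarrow> V i j = 0)
                         \<and> mmult m (madj m V) V = mone m"

text \<open>Haar measure on U(m): a probability measure on matrices, concentrated on U(m),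
  invariant under left multiplication by every element of U(m)
  (this characterises the Haar probability measure of the compact group U(m)).\<close>
definition haar_unitary :: "nat \<Rightarrow> cmat measure \<Rightarrow> bool" where
  "haar_unitary m H \<longleftrightarrow> prob_space H \<and> sets H = sets matspace
     \<and> (AE V in H. unitary_mat m V)
     \<and> (\<forall>W. unitary_mat m W \<longrightarrow> distr H matspace (mmult m W) = H)"

definition blockU :: "nat \<Rightarrow> nat \<Rightarrow> (nat \<Rightarrow> real) \<Rightarrow> cmat \<Rightarrow> cmat" where
  "blockU d N \<phi> V = (\<lambda>i j.
     if i < N \<and> j < N then (if i = j then exp (\<i> * complex_of_real (\<phi> i)) else 0)
     else if N \<le> i \<and> i < d \<and> N \<le> j \<and> j < d then V (i - N) (j - N)
     else 0)"

definition RH_ensemble :: "nat \<Rightarrow> nat \<Rightarrow> cmat measure \<Rightarrow> cmat measure" where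
  "RH_ensemble d N H =
     distr (PiM {..<N} (\<lambda>_. uniform_measure lborel {0..<2*pi}) \<Otimes>\<^sub>M H) matspace
           (\<lambda>(\<phi>, V). blockU d N \<phi> V)"

definition frame_potential2 :: "nat \<Rightarrow> cmat measure \<Rightarrow> real" where
  "frame_potential2 d \<mu> =
     (\<integral>p. (cmod (mtrace d (mmult d (madj d (fst p)) (snd p)))) ^ 4 \<partial>(\<mu> \<Otimes>\<^sub>M \<mu>))"

end

theory Submission imports Defs begin

lemma borel_measurable_cnj[measurable (raw)]:
  "f \<in> borel_measurable M \<Longrightarrow> (\<lambda>x. cnj (f x)) \<in> borel_measurable M"
  by (rule borel_measurable_continuous_on[where f=cnj]) (auto intro: linear_continuous_on bounded_linear_cnj)

lemma meas_entry: "(\<lambda>V. V i j) \<in> borel_measurable matspace"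
proof -
  have "(\<lambda>V::cmat. V i) \<in> measurable (PiM UNIV (\<lambda>_. PiM UNIV (\<lambda>_. borel))) (PiM UNIV (\<lambda>_. borel))"
    by (rule measurable_component_singleton) simp
  moreover have "(\<lambda>v::nat\<Rightarrow>complex. v j) \<in> measurable (PiM UNIV (\<lambda>_. borel)) borel"
    by (rule measurable_component_singleton) simp
  ultimately show ?thesis unfolding matspace_def by (rule measurable_compose)
qed
lemma measurable_matspaceI:
  assumes "\<And>i j. (\<lambda>x. f x i j) \<in> borel_measurable M"
  shows "f \<in> measurable M matspace"
  unfolding matspace_def
proof -
  have "(\<lambda>x i. (\<lambda>x j. f x i j) x) \<in> measurable M (PiM UNIV (\<lambda>_. PiM UNIV (\<lambda>_. borel)))"
    apply (rule measurable_PiM_single')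
     apply (rule measurable_PiM_single')
    using assms by (auto simp: space_PiM PiE_def extensional_def)
  then show "f \<in> measurable M (PiM UNIV (\<lambda>_. PiM UNIV (\<lambda>_. borel)))" by simp
qed

definition permat :: "nat \<Rightarrow> (nat \<Rightarrow> nat) \<Rightarrow> cmat" where
  "permat m \<sigma> = (\<lambda>i k. if i < m \<and> k < m \<and> k = \<sigma> i then 1 else 0)"
definition dph :: "nat \<Rightarrow> nat \<Rightarrow> cmat" where
  "dph m r = (\<lambda>i k. if i < m \<and> i = k then (if i = r then \<i> else 1) else 0)"
definition sI :: "nat \<Rightarrow> cmat" where
  "sI m = (\<lambda>i k. if i < m \<and> i = k then \<i> else 0)"
definition hs :: complex where "hs = complex_of_real (sqrt 2 / 2)"
definition hadm :: "nat \<Rightarrow> cmat" where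
  "hadm m = (\<lambda>i k. if i < 2 \<and> k < 2 then (if i = 1 \<and> k = 1 then - hs else hs)
                  else if i < m \<and> i = k then 1 else 0)"
definition rowp :: "nat \<Rightarrow> (nat \<Rightarrow> nat) \<Rightarrow> cmat \<Rightarrow> cmat" where
  "rowp m \<sigma> V = (\<lambda>i j. if i < m \<and> j < m then V (\<sigma> i) j else 0)"

lemma hs_sq: "hs * hs = 1/2"
proof -
  have "(sqrt 2 / 2) * (sqrt 2 / 2) = (1/2::real)" by (simp add: field_simps)
  then have "complex_of_real ((sqrt 2 / 2) * (sqrt 2 / 2)) = 1/2" by simp
  then show ?thesis unfolding hs_def by (simp only: of_real_mult)
qed
lemma cnj_hs[simp]: "cnj hs = hs" by (simp add: hs_def)


lemma mmult_permat:
  assumes "\<And>i. i < m \<Longrightarrow> \<sigma> i < m"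
  shows "mmult m (permat m \<sigma>) V = rowp m \<sigma> V"
proof (intro ext)
  fix i j
  show "mmult m (permat m \<sigma>) V i j = rowp m \<sigma> V i j"
  proof (cases "i < m \<and> j < m")
    case True
    have "(\<Sum>k<m. permat m \<sigma> i k * V k j) = (\<Sum>k<m. if k = \<sigma> i then V k j else 0)"
      by (rule sum.cong) (auto simp: permat_def True)
    also have "\<dots> = V (\<sigma> i) j" using assms True by (simp add: sum.delta')
    finally show ?thesis using True by (simp add: mmult_def rowp_def)
  qed (auto simp: mmult_def rowp_def)
qed

lemma unitary_permat:
  assumes "bij_betw \<sigma> {..<m} {..<m}"
  shows "unitary_mat m (permat m \<sigma>)"
  unfolding unitary_mat_def
proof (intro conjI allI impI ext)
  fix i j :: nat assume "\<not> (i < m \<and> j < m)" then show "permat m \<sigma> i j = 0" by (auto simp: permat_def)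
next
  fix i j
  show "mmult m (madj m (permat m \<sigma>)) (permat m \<sigma>) i j = mone m i j"
  proof (cases "i < m \<and> j < m")
    case True
    have sm: "\<And>k. k < m \<Longrightarrow> \<sigma> k < m" using assms by (auto simp: bij_betw_def)
    have "(\<Sum>k<m. madj m (permat m \<sigma>) i k * permat m \<sigma> k j)
        = (\<Sum>k<m. (\<lambda>x. if x = i then (if x = j then 1 else 0) else 0) (\<sigma> k))"
      by (rule sum.cong) (auto simp: madj_def permat_def True sm)
    also have "\<dots> = (\<Sum>x<m. if x = i then (if x = j then 1 else 0) else 0)"
      by (rule sum.reindex_bij_betw[OF assms])
    also have "\<dots> = (if i = j then 1 else 0)" using True by (simp add: sum.delta')
    finally show ?thesis using True by (simp add: mmult_def mone_def)
  qed (auto simp: mmult_def mone_def)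
qed

lemma mmult_dph:
  "mmult m (dph m r) V = (\<lambda>i j. if i < m \<and> j < m then (if i = r then \<i> * V i j else V i j) else 0)"
proof (intro ext)
  fix i j
  show "mmult m (dph m r) V i j = (if i < m \<and> j < m then (if i = r then \<i> * V i j else V i j) else 0)"
  proof (cases "i < m \<and> j < m")
    case True
    have "(\<Sum>k<m. dph m r i k * V k j) = (\<Sum>k<m. if k = i then (if i = r then \<i> * V k j else V k j) else 0)"
      by (rule sum.cong) (auto simp: dph_def True)
    also have "\<dots> = (if i = r then \<i> * V i j else V i j)" using True by (simp add: sum.delta')
    finally show ?thesis using True by (simp add: mmult_def)
  qed (auto simp: mmult_def)
qed

lemma unitary_dph: "unitary_mat m (dph m r)"
  unfolding unitary_mat_def
proof (intro conjI allI impI ext)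
  fix i j :: nat assume "\<not> (i < m \<and> j < m)" then show "dph m r i j = 0" by (auto simp: dph_def)
next
  fix i j
  show "mmult m (madj m (dph m r)) (dph m r) i j = mone m i j"
  proof (cases "i < m \<and> j < m")
    case True
    have "(\<Sum>k<m. madj m (dph m r) i k * dph m r k j) = (\<Sum>k<m. if k = i then (if k = j then 1 else 0) else 0)"
      by (rule sum.cong) (auto simp: dph_def madj_def True)
    also have "\<dots> = (if i = j then 1 else 0)" using True by (simp add: sum.delta')
    finally show ?thesis using True by (simp add: mmult_def mone_def)
  qed (auto simp: mmult_def mone_def)
qed

lemma mmult_sI:
  "mmult m (sI m) V = (\<lambda>i j. if i < m \<and> j < m then \<i> * V i j else 0)"
proof (intro ext)
  fix i j
  show "mmult m (sI m) V i j = (if i < m \<and> j < m then \<i> * V i j else 0)"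
  proof (cases "i < m \<and> j < m")
    case True
    have "(\<Sum>k<m. sI m i k * V k j) = (\<Sum>k<m. if k = i then \<i> * V k j else 0)"
      by (rule sum.cong) (auto simp: sI_def True)
    also have "\<dots> = \<i> * V i j" using True by (simp add: sum.delta')
    finally show ?thesis using True by (simp add: mmult_def)
  qed (auto simp: mmult_def)
qed

lemma unitary_sI: "unitary_mat m (sI m)"
  unfolding unitary_mat_def
proof (intro conjI allI impI ext)
  fix i j :: nat assume "\<not> (i < m \<and> j < m)" then show "sI m i j = 0" by (auto simp: sI_def)
next
  fix i j
  show "mmult m (madj m (sI m)) (sI m) i j = mone m i j"
  proof (cases "i < m \<and> j < m")
    case True
    have "(\<Sum>k<m. madj m (sI m) i k * sI m k j) = (\<Sum>k<m. if k = i then (if k = j then 1 else 0) else 0)"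
      by (rule sum.cong) (auto simp: sI_def madj_def True)
    also have "\<dots> = (if i = j then 1 else 0)" using True by (simp add: sum.delta')
    finally show ?thesis using True by (simp add: mmult_def mone_def)
  qed (auto simp: mmult_def mone_def)
qed

lemma sum_split01:
  fixes m :: nat
  assumes "2 \<le> m"
  shows "(\<Sum>k<m. f k) = f 0 + f 1 + (\<Sum>k\<in>{2..<m}. f k)"
proof -
  have "{..<m} = {0,1} \<union> {2..<m}" using assms by auto
  then have "(\<Sum>k<m. f k) = (\<Sum>k\<in>{0,1}. f k) + (\<Sum>k\<in>{2..<m}. f k)"
    by (simp add: sum.union_disjoint add.assoc)
  moreover have "(\<Sum>k\<in>{0,1}. f k) = f 0 + f 1" by simp
  ultimately show ?thesis by simp
qed

lemma mmult_hadm: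
  assumes "2 \<le> m"
  shows "mmult m (hadm m) V = (\<lambda>i j. if i < m \<and> j < m then
      (if i = 0 then hs * (V 0 j + V 1 j) else if i = 1 then hs * (V 0 j - V 1 j) else V i j) else 0)"
proof (intro ext)
  fix i j
  show "mmult m (hadm m) V i j = (if i < m \<and> j < m then
      (if i = 0 then hs * (V 0 j + V 1 j) else if i = 1 then hs * (V 0 j - V 1 j) else V i j) else 0)"
  proof (cases "i < m \<and> j < m")
    case True
    have "(\<Sum>k<m. hadm m i k * V k j) = hadm m i 0 * V 0 j + hadm m i 1 * V 1 j + (\<Sum>k\<in>{2..<m}. hadm m i k * V k j)"
      by (rule sum_split01[OF assms])
    also have "(\<Sum>k\<in>{2..<m}. hadm m i k * V k j) = (\<Sum>k\<in>{2..<m}. if k = i then (if i < 2 then 0 else V k j) else 0)"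
      by (rule sum.cong) (auto simp: hadm_def True)
    also have "\<dots> = (if i < 2 then 0 else V i j)" using True by (simp add: sum.delta')
    finally show ?thesis using True assms
      by (auto simp: mmult_def hadm_def algebra_simps)
  qed (auto simp: mmult_def)
qed

lemma unitary_hadm:
  assumes "2 \<le> m"
  shows "unitary_mat m (hadm m)"
  unfolding unitary_mat_def
proof (intro conjI allI impI ext)
  fix i j :: nat assume "\<not> (i < m \<and> j < m)" then show "hadm m i j = 0" using assms by (auto simp: hadm_def)
next
  fix i j
  show "mmult m (madj m (hadm m)) (hadm m) i j = mone m i j"
  proof (cases "i < m \<and> j < m")
    case True
    let ?f = "\<lambda>k. madj m (hadm m) i k * hadm m k j"
    have "(\<Sum>k<m. ?f k) = ?f 0 + ?f 1 + (\<Sum>k\<in>{2..<m}. ?f k)"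
      by (rule sum_split01[OF assms])
    also have "(\<Sum>k\<in>{2..<m}. ?f k) = (\<Sum>k\<in>{2..<m}. if k = i then (if k = j then 1 else 0) else 0)"
      by (rule sum.cong) (auto simp: hadm_def madj_def True)
    also have "\<dots> = (if i = j \<and> 2 \<le> i then 1 else 0)" using True by (simp add: sum.delta')
    finally have eq: "(\<Sum>k<m. ?f k) = ?f 0 + ?f 1 + (if i = j \<and> 2 \<le> i then 1 else 0)" .
    have "?f 0 + ?f 1 + (if i = j \<and> 2 \<le> i then 1 else 0) = (if i = j then 1 else 0)"
    proof (cases "i < 2 \<and> j < 2")
      case True
      then have "i = 0 \<or> i = 1" "j = 0 \<or> j = 1" by auto
      then show ?thesis using assms hs_sq by (auto simp: madj_def hadm_def hs_sq)
    next
      case False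
      then show ?thesis using assms True by (auto simp: madj_def hadm_def)
    qed
    then show ?thesis using eq True by (simp add: mmult_def mone_def)
  qed (auto simp: mmult_def mone_def)
qed

lemma mmult_assoc:
  "mmult m A (mmult m B C) = mmult m (mmult m A B) C"
proof (intro ext)
  fix i j
  show "mmult m A (mmult m B C) i j = mmult m (mmult m A B) C i j"
  proof (cases "i < m \<and> j < m")
    case True
    have "(\<Sum>k<m. A i k * mmult m B C k j) = (\<Sum>k<m. \<Sum>l<m. A i k * B k l * C l j)"
      by (rule sum.cong) (auto simp: mmult_def True sum_distrib_left mult.assoc)
    also have "\<dots> = (\<Sum>l<m. \<Sum>k<m. A i k * B k l * C l j)" by (rule sum.swap)
    also have "\<dots> = (\<Sum>l<m. mmult m A B i l * C l j)"
      by (rule sum.cong) (auto simp: mmult_def True sum_distrib_right)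
    finally show ?thesis using True by (simp add: mmult_def)
  qed (auto simp: mmult_def)
qed

lemma trace_unitary_cancel:
  assumes "unitary_mat m V"
  shows "mtrace m (mmult m (madj m V) (mmult m V W)) = mtrace m W"
proof -
  have "mmult m (madj m V) (mmult m V W) = mmult m (mone m) W"
    using assms by (simp add: mmult_assoc unitary_mat_def)
  moreover have "\<And>i. i < m \<Longrightarrow> mmult m (mone m) W i i = W i i"
  proof -
    fix i assume i: "i < m"
    have "(\<Sum>k<m. mone m i k * W k i) = (\<Sum>k<m. if k = i then W k i else 0)"
      by (rule sum.cong) (auto simp: mone_def)
    then show "mmult m (mone m) W i i = W i i" using i by (simp add: mmult_def sum.delta')
  qed
  ultimately show ?thesis by (simp add: mtrace_def)
qed

lemma col_norm:
  assumes "unitary_mat m V" "c < m"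
  shows "(\<Sum>a<m. V a c * cnj (V a c)) = 1"
proof -
  have "mmult m (madj m V) V c c = 1" using assms by (simp add: unitary_mat_def mone_def)
  then show ?thesis using assms(2) by (simp add: mmult_def madj_def mult.commute)
qed

lemma col_orth:
  assumes "unitary_mat m V" "c < m" "c' < m" "c \<noteq> c'"
  shows "(\<Sum>a<m. cnj (V a c) * V a c') = 0"
proof -
  have "mmult m (madj m V) V c c' = 0" using assms by (simp add: unitary_mat_def mone_def)
  then show ?thesis using assms(2,3) by (simp add: mmult_def madj_def)
qed

lemma entry_bound:
  assumes "unitary_mat m V"
  shows "cmod (V a c) \<le> 1"
proof (cases "a < m \<and> c < m")
  case True
  have "complex_of_real (\<Sum>k<m. cmod (V k c) ^ 2) = (\<Sum>k<m. complex_of_real (cmod (V k c) ^ 2))"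
    by (simp only: of_real_sum)
  also have "\<dots> = (\<Sum>k<m. V k c * cnj (V k c))"
    by (rule sum.cong[OF refl]) (rule complex_norm_square)
  also have "\<dots> = 1" using col_norm assms True by blast
  finally have s: "(\<Sum>k<m. cmod (V k c) ^ 2) = 1" by (simp only: of_real_eq_1_iff)
  have "cmod (V a c) ^ 2 \<le> (\<Sum>k<m. cmod (V k c) ^ 2)"
    using True by (intro member_le_sum) auto
  then have "cmod (V a c) ^ 2 \<le> 1 ^ 2" using s by simp
  then show ?thesis by (rule power2_le_imp_le) simp
next
  case False
  then show ?thesis using assms by (simp add: unitary_mat_def)
qed

lemma cmod4: "complex_of_real (cmod z ^ 4) = (z * cnj z)^2"
proof -
  have "complex_of_real (cmod z ^ 4) = (complex_of_real (cmod z ^ 2))^2"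
    by (simp add: power_mult[symmetric])
  also have "\<dots> = (z * cnj z)^2" by (simp only: complex_norm_square)
  finally show ?thesis .
qed

lemma quartic_mean:
  fixes T :: "'a \<Rightarrow> complex" and x :: complex
  assumes P: "prob_space \<mu>" and Tm[measurable]: "T \<in> borel_measurable \<mu>"
    and bnd: "AE \<omega> in \<mu>. cmod (T \<omega>) \<le> B"
    and m1: "integral\<^sup>L \<mu> T = 0" and m2: "integral\<^sup>L \<mu> (\<lambda>\<omega>. T \<omega> ^ 2) = 0"
    and m3: "integral\<^sup>L \<mu> (\<lambda>\<omega>. T \<omega> * cnj (T \<omega>) * T \<omega>) = 0"
  shows "(\<integral>\<^sup>+\<omega>. ennreal (cmod (x + T \<omega>) ^ 4) \<partial>\<mu>) =
     ennreal (cmod x ^ 4 + 4 * cmod x ^ 2 * integral\<^sup>L \<mu> (\<lambda>\<omega>. cmod (T \<omega>) ^ 2)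
              + integral\<^sup>L \<mu> (\<lambda>\<omega>. cmod (T \<omega>) ^ 4))"
proof -
  interpret prob_space \<mu> by fact
  define M where "M a b \<omega> = T \<omega> ^ a * cnj (T \<omega>) ^ b" for a b :: nat and \<omega>
  have Mm[measurable]: "M a b \<in> borel_measurable \<mu>" for a b unfolding M_def by measurable
  have intM: "integrable \<mu> (M a b)" for a b
  proof (rule integrable_const_bound[where B="max 1 B ^ (a+b)"])
    show "AE \<omega> in \<mu>. norm (M a b \<omega>) \<le> max 1 B ^ (a + b)"
      using bnd
    proof eventually_elim
      case (elim \<omega>)
      have "norm (M a b \<omega>) = cmod (T \<omega>) ^ (a + b)"
        by (simp add: M_def norm_mult norm_power power_add)
      also have "\<dots> \<le> max 1 B ^ (a + b)"
        using elim by (intro power_mono) auto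
      finally show ?case .
    qed
  qed (rule Mm)
  define u where "u = x * cnj x"
  have eq: "complex_of_real (cmod (x + T \<omega>) ^ 4) =
      u^2 + 4*u*M 1 1 \<omega> + M 2 2 \<omega> + 2*u*x*M 0 1 \<omega> + 2*u*cnj x*M 1 0 \<omega>
      + x^2*M 0 2 \<omega> + cnj x^2*M 2 0 \<omega> + 2*x*M 1 2 \<omega> + 2*cnj x*M 2 1 \<omega>" for \<omega>
  proof -
    have "complex_of_real (cmod (x + T \<omega>) ^ 4) = (complex_of_real (cmod (x + T \<omega>) ^ 2))^2"
      by (simp add: power_mult[symmetric])
    also have "\<dots> = ((x + T \<omega>) * cnj (x + T \<omega>))^2" by (simp only: complex_norm_square)
    finally show ?thesis unfolding M_def u_def by (simp add: algebra_simps power2_eq_square)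
  qed
  have i10: "integral\<^sup>L \<mu> (M 1 0) = 0" using m1 by (simp add: M_def[abs_def])
  have i01: "integral\<^sup>L \<mu> (M 0 1) = 0" using m1 by (simp add: M_def[abs_def])
  have i20: "integral\<^sup>L \<mu> (M 2 0) = 0" using m2 by (simp add: M_def[abs_def])
  have i02: "integral\<^sup>L \<mu> (M 0 2) = 0"
  proof -
    have "integral\<^sup>L \<mu> (M 0 2) = integral\<^sup>L \<mu> (\<lambda>\<omega>. cnj (T \<omega> ^ 2))" by (simp add: M_def[abs_def])
    then show ?thesis using m2 by (simp del: complex_cnj_power)
  qed
  have i21: "integral\<^sup>L \<mu> (M 2 1) = 0"
  proof -
    have "integral\<^sup>L \<mu> (M 2 1) = integral\<^sup>L \<mu> (\<lambda>\<omega>. T \<omega> * cnj (T \<omega>) * T \<omega>)"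
      by (rule Bochner_Integration.integral_cong) (auto simp: M_def power2_eq_square)
    then show ?thesis using m3 by simp
  qed
  have i12: "integral\<^sup>L \<mu> (M 1 2) = 0"
  proof -
    have "integral\<^sup>L \<mu> (M 1 2) = integral\<^sup>L \<mu> (\<lambda>\<omega>. cnj (T \<omega> * cnj (T \<omega>) * T \<omega>))"
      by (rule Bochner_Integration.integral_cong) (auto simp: M_def power2_eq_square)
    also have "\<dots> = cnj (integral\<^sup>L \<mu> (\<lambda>\<omega>. T \<omega> * cnj (T \<omega>) * T \<omega>))"
      by (rule Bochner_Integration.integral_cnj)
    finally show ?thesis using m3 by simp
  qed
  have i11: "integral\<^sup>L \<mu> (M 1 1) = complex_of_real (integral\<^sup>L \<mu> (\<lambda>\<omega>. cmod (T \<omega>) ^ 2))"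
  proof -
    have "integral\<^sup>L \<mu> (M 1 1) = integral\<^sup>L \<mu> (\<lambda>\<omega>. complex_of_real (cmod (T \<omega>) ^ 2))"
      by (rule Bochner_Integration.integral_cong) (simp_all add: M_def complex_norm_square del: of_real_power)
    then show ?thesis by (simp only: integral_complex_of_real)
  qed
  have i22: "integral\<^sup>L \<mu> (M 2 2) = complex_of_real (integral\<^sup>L \<mu> (\<lambda>\<omega>. cmod (T \<omega>) ^ 4))"
  proof -
    have "integral\<^sup>L \<mu> (M 2 2) = integral\<^sup>L \<mu> (\<lambda>\<omega>. complex_of_real (cmod (T \<omega>) ^ 4))"
      by (rule Bochner_Integration.integral_cong) (simp_all add: M_def cmod4 power_mult_distrib del: of_real_power)
    then show ?thesis by (simp only: integral_complex_of_real)
  qed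
  have "complex_of_real (integral\<^sup>L \<mu> (\<lambda>\<omega>. cmod (x + T \<omega>) ^ 4))
      = integral\<^sup>L \<mu> (\<lambda>\<omega>. u^2 + 4*u*M 1 1 \<omega> + M 2 2 \<omega> + 2*u*x*M 0 1 \<omega> + 2*u*cnj x*M 1 0 \<omega>
      + x^2*M 0 2 \<omega> + cnj x^2*M 2 0 \<omega> + 2*x*M 1 2 \<omega> + 2*cnj x*M 2 1 \<omega>)"
    by (simp only: eq integral_complex_of_real[symmetric])
  also have "\<dots> = u^2 + 4*u*integral\<^sup>L \<mu> (M 1 1) + integral\<^sup>L \<mu> (M 2 2)
      + 2*u*x*integral\<^sup>L \<mu> (M 0 1) + 2*u*cnj x*integral\<^sup>L \<mu> (M 1 0)
      + x^2*integral\<^sup>L \<mu> (M 0 2) + cnj x^2*integral\<^sup>L \<mu> (M 2 0)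
      + 2*x*integral\<^sup>L \<mu> (M 1 2) + 2*cnj x*integral\<^sup>L \<mu> (M 2 1)"
    by (simp add: intM prob_space)
  also have "\<dots> = complex_of_real (cmod x ^ 4 + 4 * cmod x ^ 2 * integral\<^sup>L \<mu> (\<lambda>\<omega>. cmod (T \<omega>) ^ 2)
              + integral\<^sup>L \<mu> (\<lambda>\<omega>. cmod (T \<omega>) ^ 4))"
  proof -
    have "u = complex_of_real (cmod x ^ 2)" unfolding u_def by (simp only: complex_norm_square)
    then show ?thesis using i10 i01 i20 i02 i21 i12 i11 i22
      by (simp add: power_mult[symmetric] algebra_simps power2_eq_square eval_nat_numeral)
  qed
  finally have R: "integral\<^sup>L \<mu> (\<lambda>\<omega>. cmod (x + T \<omega>) ^ 4) = cmod x ^ 4 + 4 * cmod x ^ 2 * integral\<^sup>L \<mu> (\<lambda>\<omega>. cmod (T \<omega>) ^ 2)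
              + integral\<^sup>L \<mu> (\<lambda>\<omega>. cmod (T \<omega>) ^ 4)" by (simp only: of_real_eq_iff)
  have "integrable \<mu> (\<lambda>\<omega>. cmod (x + T \<omega>) ^ 4)"
  proof (rule integrable_const_bound[where B="(cmod x + B) ^ 4"])
    show "AE \<omega> in \<mu>. norm (cmod (x + T \<omega>) ^ 4) \<le> (cmod x + B) ^ 4"
      using bnd
    proof eventually_elim
      case (elim \<omega>)
      have "cmod (x + T \<omega>) \<le> cmod x + B" using norm_triangle_ineq[of x "T \<omega>"] elim by linarith
      then show ?case by (simp add: power_mono)
    qed
  qed measurable
  then have "(\<integral>\<^sup>+\<omega>. ennreal (cmod (x + T \<omega>) ^ 4) \<partial>\<mu>) = ennreal (integral\<^sup>L \<mu> (\<lambda>\<omega>. cmod (x + T \<omega>) ^ 4))"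
    by (intro nn_integral_eq_integral) auto
  then show ?thesis using R by simp
qed

definition sw :: "nat \<Rightarrow> nat \<Rightarrow> nat \<Rightarrow> nat" where
  "sw u v x = (if x = u then v else if x = v then u else x)"

lemma sw_bij: "u < m \<Longrightarrow> v < m \<Longrightarrow> bij_betw (sw u v) {..<m} {..<m}"
  by (rule bij_betwI[where g="sw u v"]) (auto simp: sw_def)

lemma pair_perm:
  fixes a b m :: nat
  assumes "a < m" "b < m" "a \<noteq> b" "2 \<le> m"
  obtains \<sigma> where "bij_betw \<sigma> {..<m} {..<m}" "\<sigma> 0 = a" "\<sigma> 1 = b"
proof -
  let ?\<sigma> = "sw 0 a \<circ> sw 1 (sw 0 a b)"
  have "bij_betw ?\<sigma> {..<m} {..<m}"
    using assms by (intro bij_betw_trans[OF sw_bij sw_bij]) (auto simp: sw_def)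
  moreover have "?\<sigma> 0 = a" "?\<sigma> 1 = b" using assms by (auto simp: sw_def)
  ultimately show ?thesis using that by blast
qed

definition w2 :: "cmat \<Rightarrow> nat \<Rightarrow> nat \<Rightarrow> complex" where
  "w2 V a c = V a c * cnj (V a c)"
definition w4 :: "cmat \<Rightarrow> nat \<Rightarrow> nat \<Rightarrow> nat \<Rightarrow> nat \<Rightarrow> complex" where
  "w4 V a b c c' = V a c * cnj (V a c) * V b c' * cnj (V b c')"
definition g4 :: "cmat \<Rightarrow> nat \<Rightarrow> nat \<Rightarrow> nat \<Rightarrow> nat \<Rightarrow> complex" where
  "g4 V a b c c' = cnj (V a c) * V a c' * V b c * cnj (V b c')"

lemma sum_diag_const:
  "(\<Sum>a<m. \<Sum>b<m. if a = b then X else Y) = of_nat m * X + of_nat m * (of_nat m - 1) * (Y::complex)"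
proof -
  have "(\<Sum>b<m. if a = b then X else Y) = X + (of_nat m - 1) * Y" if "a < m" for a
  proof -
    have "(\<Sum>b<m. if a = b then X else Y) = (if a = a then X else Y) + (\<Sum>b\<in>{..<m} - {a}. if a = b then X else Y)"
      using that by (subst sum.remove[of _ a]) auto
    also have "(\<Sum>b\<in>{..<m} - {a}. if a = b then X else Y) = (\<Sum>b\<in>{..<m} - {a}. Y)"
      by (rule sum.cong) auto
    also have "\<dots> = of_nat (m - 1) * Y" using that by simp
    finally show ?thesis using that by (simp add: of_nat_diff)
  qed
  then have "(\<Sum>a<m. \<Sum>b<m. if a = b then X else Y) = (\<Sum>a<m. X + (of_nat m - 1) * Y)"
    by (intro sum.cong) auto
  then show ?thesis by (simp add: algebra_simps)
qed

context
  fixes m :: nat and H :: "cmat measure"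
  assumes haar: "haar_unitary m H"
begin

lemma H_prob: "prob_space H" using haar unfolding haar_unitary_def by auto
lemma H_sets: "sets H = sets matspace" using haar unfolding haar_unitary_def by auto
lemma H_AE: "AE V in H. unitary_mat m V" using haar unfolding haar_unitary_def by auto
lemma H_measI: "f \<in> measurable matspace N \<Longrightarrow> f \<in> measurable H N"
  using measurable_cong_sets[OF H_sets refl] by auto

lemma mmult_meas: "mmult m W \<in> measurable matspace matspace"
proof (rule measurable_matspaceI)
  fix i j
  have [measurable]: "(\<lambda>V. V i j) \<in> borel_measurable matspace" for i j by (rule meas_entry)
  show "(\<lambda>x. mmult m W x i j) \<in> borel_measurable matspace"
  proof (cases "i < m \<and> j < m")
    case True
    then have "(\<lambda>x. mmult m W x i j) = (\<lambda>x. \<Sum>k<m. W i k * x k j)" by (simp add: mmult_def)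
    then show ?thesis by simp
  next
    case False
    then have "(\<lambda>x. mmult m W x i j) = (\<lambda>x. 0)" by (auto simp: mmult_def)
    then show ?thesis by simp
  qed
qed

lemma H_inv:
  fixes f :: "cmat \<Rightarrow> complex"
  assumes W: "unitary_mat m W" and f: "f \<in> borel_measurable matspace"
  shows "integral\<^sup>L H f = integral\<^sup>L H (\<lambda>V. f (mmult m W V))"
proof -
  have D: "distr H matspace (mmult m W) = H" using haar W unfolding haar_unitary_def by auto
  have "integral\<^sup>L H f = integral\<^sup>L (distr H matspace (mmult m W)) f" by (simp add: D)
  also have "\<dots> = integral\<^sup>L H (\<lambda>V. f (mmult m W V))"
    by (rule integral_distr[OF H_measI[OF mmult_meas] f])
  finally show ?thesis .
qed

lemma H_inv_nn:
  assumes W: "unitary_mat m W" and f: "f \<in> borel_measurable matspace"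
  shows "integral\<^sup>N H f = integral\<^sup>N H (\<lambda>V. f (mmult m W V))"
proof -
  have D: "distr H matspace (mmult m W) = H" using haar W unfolding haar_unitary_def by auto
  have "integral\<^sup>N H f = integral\<^sup>N (distr H matspace (mmult m W)) f" by (simp add: D)
  also have "\<dots> = integral\<^sup>N H (\<lambda>V. f (mmult m W V))"
    by (rule nn_integral_distr[OF H_measI[OF mmult_meas]]) (simp add: D H_measI[OF f])
  finally show ?thesis .
qed

lemma H_int:
  fixes f :: "cmat \<Rightarrow> complex"
  assumes f: "f \<in> borel_measurable matspace" and b: "\<And>V. unitary_mat m V \<Longrightarrow> cmod (f V) \<le> B"
  shows "integrable H f"
proof -
  interpret prob_space H by (rule H_prob)
  show ?thesis
    using H_AE by (intro integrable_const_bound[where B=B] H_measI f) (auto elim: AE_mp intro: b)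
qed

lemma H_AE_const:
  fixes f :: "cmat \<Rightarrow> complex"
  assumes f: "f \<in> borel_measurable matspace" and b: "\<And>V. unitary_mat m V \<Longrightarrow> f V = k"
  shows "integral\<^sup>L H f = k"
proof -
  interpret prob_space H by (rule H_prob)
  have "integral\<^sup>L H f = integral\<^sup>L H (\<lambda>_. k)"
    using H_AE by (intro integral_cong_AE H_measI f) (auto elim: AE_mp intro: b)
  then show ?thesis by (simp add: prob_space)
qed

lemma kill:
  fixes f :: "cmat \<Rightarrow> complex"
  assumes W: "unitary_mat m W" and f: "f \<in> borel_measurable matspace"
    and e: "\<And>V. f (mmult m W V) = z * f V" and z: "z \<noteq> 1"
  shows "integral\<^sup>L H f = 0"
proof -
  have "integral\<^sup>L H f = integral\<^sup>L H (\<lambda>V. z * f V)" using H_inv[OF W f] e by simp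
  also have "\<dots> = z * integral\<^sup>L H f" by simp
  finally have "(1 - z) * integral\<^sup>L H f = 0" by (simp add: algebra_simps)
  then show ?thesis using z by simp
qed

lemma perm_inv:
  fixes f :: "cmat \<Rightarrow> complex"
  assumes \<sigma>: "bij_betw \<sigma> {..<m} {..<m}" and f: "f \<in> borel_measurable matspace"
  shows "integral\<^sup>L H f = integral\<^sup>L H (\<lambda>V. f (rowp m \<sigma> V))"
proof -
  have sm: "\<And>i. i < m \<Longrightarrow> \<sigma> i < m" using \<sigma> by (auto simp: bij_betw_def)
  show ?thesis using H_inv[OF unitary_permat[OF \<sigma>] f] mmult_permat[OF sm] by simp
qed

lemma meas_w2[measurable]: "(\<lambda>V. w2 V a c) \<in> borel_measurable matspace"
proof -
  have [measurable]: "(\<lambda>V::cmat. V a c) \<in> borel_measurable matspace" by (rule meas_entry)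
  show ?thesis unfolding w2_def by measurable
qed
lemma meas_w4[measurable]: "(\<lambda>V. w4 V a b c c') \<in> borel_measurable matspace"
proof -
  have [measurable]: "(\<lambda>V::cmat. V a c) \<in> borel_measurable matspace" by (rule meas_entry)
  have [measurable]: "(\<lambda>V::cmat. V b c') \<in> borel_measurable matspace" by (rule meas_entry)
  show ?thesis unfolding w4_def by measurable
qed
lemma meas_g4[measurable]: "(\<lambda>V. g4 V a b c c') \<in> borel_measurable matspace"
proof -
  have [measurable]: "(\<lambda>V::cmat. V a c) \<in> borel_measurable matspace" by (rule meas_entry)
  have [measurable]: "(\<lambda>V::cmat. V b c') \<in> borel_measurable matspace" by (rule meas_entry)
  have [measurable]: "(\<lambda>V::cmat. V a c') \<in> borel_measurable matspace" by (rule meas_entry)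
  have [measurable]: "(\<lambda>V::cmat. V b c) \<in> borel_measurable matspace" by (rule meas_entry)
  show ?thesis unfolding g4_def by measurable
qed

lemma prod_le1: "0 \<le> (x::real) \<Longrightarrow> x \<le> 1 \<Longrightarrow> 0 \<le> y \<Longrightarrow> y \<le> 1 \<Longrightarrow> x * y \<le> 1"
  by (rule mult_le_one)

lemma int_w2: "integrable H (\<lambda>V. w2 V a c)"
  by (rule H_int[OF meas_w2, where B=1]) (auto simp: w2_def norm_mult intro!: prod_le1 entry_bound)
lemma int_w4: "integrable H (\<lambda>V. w4 V a b c c')"
  by (rule H_int[OF meas_w4, where B=1]) (auto simp: w4_def norm_mult intro!: prod_le1 entry_bound)
lemma int_g4: "integrable H (\<lambda>V. g4 V a b c c')"
  by (rule H_int[OF meas_g4, where B=1]) (auto simp: g4_def norm_mult intro!: prod_le1 entry_bound)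

end

definition mon4 :: "cmat \<Rightarrow> nat \<Rightarrow> nat \<Rightarrow> nat \<Rightarrow> nat \<Rightarrow> nat \<Rightarrow> nat \<Rightarrow> nat \<Rightarrow> nat \<Rightarrow> complex" where
  "mon4 V a1 c1 a2 c2 a3 c3 a4 c4 = V a1 c1 * V a2 c2 * cnj (V a3 c3) * cnj (V a4 c4)"
definition mono2 :: "cmat \<Rightarrow> nat \<Rightarrow> nat \<Rightarrow> nat \<Rightarrow> nat \<Rightarrow> complex" where
  "mono2 V a1 c1 a3 c3 = V a1 c1 * cnj (V a3 c3)"
definition cnt :: "nat \<Rightarrow> nat \<Rightarrow> nat \<Rightarrow> nat" where
  "cnt r x y = (if x = r then 1 else 0) + (if y = r then 1 else 0)"

lemma meas_mono[measurable]: "(\<lambda>V. mon4 V a1 c1 a2 c2 a3 c3 a4 c4) \<in> borel_measurable matspace"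
proof -
  have [measurable]: "(\<lambda>V::cmat. V a c) \<in> borel_measurable matspace" for a c by (rule meas_entry)
  show ?thesis unfolding mon4_def by measurable
qed
lemma meas_mono2[measurable]: "(\<lambda>V. mono2 V a1 c1 a3 c3) \<in> borel_measurable matspace"
proof -
  have [measurable]: "(\<lambda>V::cmat. V a c) \<in> borel_measurable matspace" for a c by (rule meas_entry)
  show ?thesis unfolding mono2_def by measurable
qed

lemma dph_entry: "a < m \<Longrightarrow> c < m \<Longrightarrow> mmult m (dph m r) V a c = (if a = r then \<i> else 1) * V a c"
  by (simp add: mmult_dph)

lemma ifi_cnt: "(if a1 = r then \<i> else 1) * (if a2 = r then \<i> else 1) = \<i> ^ cnt r a1 a2"
  by (auto simp: cnt_def)

lemma z_ne1:
  assumes "k1 \<le> 2" "k2 \<le> 2" "k1 \<noteq> k2"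
  shows "\<i> ^ k1 * cnj \<i> ^ k2 \<noteq> 1"
proof -
  have "k1 = 0 \<or> k1 = 1 \<or> k1 = 2" "k2 = 0 \<or> k2 = 1 \<or> k2 = 2" using assms by auto
  then show ?thesis using assms by (auto simp: power2_eq_square complex_eq_iff)
qed

lemma cnt_le: "cnt r x y \<le> 2" by (simp add: cnt_def)

context
  fixes m :: nat and H :: "cmat measure"
  assumes haar: "haar_unitary m H"
begin

lemma int_mono: "integrable H (\<lambda>V. mon4 V a1 c1 a2 c2 a3 c3 a4 c4)"
  by (rule H_int[OF haar meas_mono, where B=1]) (auto simp: mon4_def norm_mult intro!: mult_le_one entry_bound)
lemma int_mono2: "integrable H (\<lambda>V. mono2 V a1 c1 a3 c3)"
  by (rule H_int[OF haar meas_mono2, where B=1]) (auto simp: mono2_def norm_mult intro!: mult_le_one entry_bound)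

lemma kill_mono:
  assumes "a1 < m" "a2 < m" "a3 < m" "a4 < m" "c1 < m" "c2 < m" "c3 < m" "c4 < m"
    and "cnt r a1 a2 \<noteq> cnt r a3 a4"
  shows "integral\<^sup>L H (\<lambda>V. mon4 V a1 c1 a2 c2 a3 c3 a4 c4) = 0"
proof (rule kill[OF haar unitary_dph meas_mono])
  fix V
  have "mon4 (mmult m (dph m r) V) a1 c1 a2 c2 a3 c3 a4 c4
     = ((if a1 = r then \<i> else 1) * (if a2 = r then \<i> else 1)) *
       (cnj (if a3 = r then \<i> else 1) * cnj (if a4 = r then \<i> else 1)) * mon4 V a1 c1 a2 c2 a3 c3 a4 c4"
    using assms by (simp add: mon4_def dph_entry ac_simps)
  also have "\<dots> = (\<i> ^ cnt r a1 a2 * cnj \<i> ^ cnt r a3 a4) * mon4 V a1 c1 a2 c2 a3 c3 a4 c4"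
    by (simp only: ifi_cnt complex_cnj_mult[symmetric]) (simp add: mult.assoc)
  finally show "mon4 (mmult m (dph m r) V) a1 c1 a2 c2 a3 c3 a4 c4 = (\<i> ^ cnt r a1 a2 * cnj \<i> ^ cnt r a3 a4) * mon4 V a1 c1 a2 c2 a3 c3 a4 c4" .
  show "\<i> ^ cnt r a1 a2 * cnj \<i> ^ cnt r a3 a4 \<noteq> 1"
    using assms(9) by (intro z_ne1 cnt_le)
qed

lemma kill_mono2:
  assumes "a1 < m" "a3 < m" "c1 < m" "c3 < m" "a1 \<noteq> a3"
  shows "integral\<^sup>L H (\<lambda>V. mono2 V a1 c1 a3 c3) = 0"
proof (rule kill[OF haar unitary_dph[of m a1] meas_mono2, where z=\<i>])
  fix V
  show "mono2 (mmult m (dph m a1) V) a1 c1 a3 c3 = \<i> * mono2 V a1 c1 a3 c3"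
    using assms by (simp add: mono2_def dph_entry ac_simps)
qed simp

lemma perm_mono:
  assumes \<sigma>: "bij_betw \<sigma> {..<m} {..<m}"
    and "a1 < m" "a2 < m" "a3 < m" "a4 < m" "c1 < m" "c2 < m" "c3 < m" "c4 < m"
  shows "integral\<^sup>L H (\<lambda>V. mon4 V (\<sigma> a1) c1 (\<sigma> a2) c2 (\<sigma> a3) c3 (\<sigma> a4) c4)
       = integral\<^sup>L H (\<lambda>V. mon4 V a1 c1 a2 c2 a3 c3 a4 c4)"
proof -
  have "integral\<^sup>L H (\<lambda>V. mon4 V a1 c1 a2 c2 a3 c3 a4 c4)
      = integral\<^sup>L H (\<lambda>V. mon4 (rowp m \<sigma> V) a1 c1 a2 c2 a3 c3 a4 c4)"
    by (rule perm_inv[OF haar \<sigma> meas_mono])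
  also have "\<dots> = integral\<^sup>L H (\<lambda>V. mon4 V (\<sigma> a1) c1 (\<sigma> a2) c2 (\<sigma> a3) c3 (\<sigma> a4) c4)"
    using assms by (simp add: mon4_def rowp_def)
  finally show ?thesis by simp
qed

lemma perm_mono2:
  assumes \<sigma>: "bij_betw \<sigma> {..<m} {..<m}"
    and "a1 < m" "a3 < m" "c1 < m" "c3 < m"
  shows "integral\<^sup>L H (\<lambda>V. mono2 V (\<sigma> a1) c1 (\<sigma> a3) c3)
       = integral\<^sup>L H (\<lambda>V. mono2 V a1 c1 a3 c3)"
proof -
  have "integral\<^sup>L H (\<lambda>V. mono2 V a1 c1 a3 c3)
      = integral\<^sup>L H (\<lambda>V. mono2 (rowp m \<sigma> V) a1 c1 a3 c3)"
    by (rule perm_inv[OF haar \<sigma> meas_mono2])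
  also have "\<dots> = integral\<^sup>L H (\<lambda>V. mono2 V (\<sigma> a1) c1 (\<sigma> a3) c3)"
    using assms by (simp add: mono2_def rowp_def)
  finally show ?thesis by simp
qed

lemma H_AE_const': "(\<And>V. unitary_mat m V \<Longrightarrow> f V = k) \<Longrightarrow> f \<in> borel_measurable matspace \<Longrightarrow> integral\<^sup>L H f = (k::complex)"
  using H_AE_const[OF haar] by blast

lemma col2:
  assumes "c < m" "a < m"
  shows "integral\<^sup>L H (\<lambda>V. mono2 V a c a c) = 1 / of_nat m"
proof -
  have e: "integral\<^sup>L H (\<lambda>V. mono2 V b c b c) = integral\<^sup>L H (\<lambda>V. mono2 V 0 c 0 c)" if "b < m" for b
    using perm_mono2[OF sw_bij[of 0 m b], of 0 0 c c] that assms by (simp add: sw_def)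
  have "integral\<^sup>L H (\<lambda>V. \<Sum>b<m. mono2 V b c b c) = 1"
  proof (rule H_AE_const')
    show "(\<lambda>V. \<Sum>b<m. mono2 V b c b c) \<in> borel_measurable matspace" by measurable
  qed (use col_norm assms in \<open>auto simp: mono2_def\<close>)
  moreover have "integral\<^sup>L H (\<lambda>V. \<Sum>b<m. mono2 V b c b c) = (\<Sum>b<m. integral\<^sup>L H (\<lambda>V. mono2 V b c b c))"
    by (rule Bochner_Integration.integral_sum) (rule int_mono2)
  moreover have "\<dots> = (\<Sum>b<m. integral\<^sup>L H (\<lambda>V. mono2 V 0 c 0 c))"
    by (rule sum.cong[OF refl]) (rule e, simp)
  moreover have "\<dots> = of_nat m * integral\<^sup>L H (\<lambda>V. mono2 V 0 c 0 c)"
    by simp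
  ultimately have h: "of_nat m * integral\<^sup>L H (\<lambda>V. mono2 V 0 c 0 c) = 1" by simp
  have "of_nat m \<noteq> (0::complex)" using assms by simp
  then have "integral\<^sup>L H (\<lambda>V. mono2 V 0 c 0 c) = 1 / of_nat m" using h by (simp add: eq_divide_eq mult.commute)
  then show ?thesis using e[OF assms(2)] by (simp only:)
qed

end

lemma s2: "(\<Sum>x<(2::nat). g x) = g 0 + (g 1 :: complex)" by (simp add: numeral_2_eq_2)
lemma sum4_2: "(\<Sum>x<(2::nat). \<Sum>y<(2::nat). \<Sum>z<(2::nat). \<Sum>w<(2::nat). f x y z w) =
  f 0 0 0 0 + f 0 0 0 1 + f 0 0 1 0 + f 0 0 1 1 + f 0 1 0 0 + f 0 1 0 1 + f 0 1 1 0 + f 0 1 1 1 +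
  f 1 0 0 0 + f 1 0 0 1 + f 1 0 1 0 + f 1 0 1 1 + f 1 1 0 0 + f 1 1 0 1 + f 1 1 1 0 + (f 1 1 1 1 :: complex)"
  by (simp only: s2 add.assoc)
lemma hs4: "hs * hs * hs * hs = 1/4"
proof -
  have "hs * hs * hs * hs = (hs * hs) * (hs * hs)" by (simp add: mult.assoc)
  also have "\<dots> = 1/4" by (simp add: hs_sq)
  finally show ?thesis .
qed

lemma sum_if_eq: "(\<Sum>l<m. if l = i then X else 0) = (if i < (m::nat) then X else (0::complex))"
  by (induct m) auto

lemma sum_pairs:
  fixes X :: complex and m i j :: nat
  assumes "i < m" "j < m"
  shows "(\<Sum>k<m. \<Sum>l<m. if (k = i \<and> l = j) \<or> (k = j \<and> l = i) then X else 0) = (if i = j then X else 2 * X)"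
proof -
  have "(\<Sum>l<m. if (k = i \<and> l = j) \<or> (k = j \<and> l = i) then X else 0)
      = (if k = i then X else 0) + (if k = j \<and> i \<noteq> j then X else 0)" for k
  proof -
    have "(\<Sum>l<m. if (k = i \<and> l = j) \<or> (k = j \<and> l = i) then X else 0)
        = (\<Sum>l<m. (if l = j then (if k = i then X else 0) else 0) + (if l = i then (if k = j \<and> i \<noteq> j then X else 0) else 0))"
      by (rule sum.cong) auto
    also have "\<dots> = (if k = i then X else 0) + (if k = j \<and> i \<noteq> j then X else 0)"
      using assms by (simp add: sum.distrib sum_if_eq)
    finally show ?thesis .
  qed
  then have "(\<Sum>k<m. \<Sum>l<m. if (k = i \<and> l = j) \<or> (k = j \<and> l = i) then X else 0)
      = (\<Sum>k<m. (if k = i then X else 0) + (if k = j \<and> i \<noteq> j then X else 0))"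
    by (intro sum.cong) auto
  also have "\<dots> = X + (if i \<noteq> j then X else 0)"
    using assms by (simp add: sum.distrib sum_if_eq)
  finally show ?thesis by auto
qed

context
  fixes m :: nat and H :: "cmat measure"
  assumes haar: "haar_unitary m H"
begin

lemma integral_sum2:
  "(\<And>a b. integrable H (f a b)) \<Longrightarrow>
   integral\<^sup>L H (\<lambda>V. \<Sum>a\<in>A. \<Sum>b\<in>B. f a b V) = (\<Sum>a\<in>A. \<Sum>b\<in>B. integral\<^sup>L H (f a b :: cmat \<Rightarrow> complex))"
  by (simp add: Bochner_Integration.integral_sum Bochner_Integration.integrable_sum)

lemma integral_sum4:
  "(\<And>a b c d. integrable H (f a b c d)) \<Longrightarrow>
   integral\<^sup>L H (\<lambda>V. \<Sum>a\<in>A. \<Sum>b\<in>B. \<Sum>c\<in>C. \<Sum>d\<in>D. f a b c d V)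
     = (\<Sum>a\<in>A. \<Sum>b\<in>B. \<Sum>c\<in>C. \<Sum>d\<in>D. integral\<^sup>L H (f a b c d :: cmat \<Rightarrow> complex))"
  by (simp add: Bochner_Integration.integral_sum Bochner_Integration.integrable_sum)

lemma Fab:
  assumes "c < m" "c' < m" "a < m" "b < m"
  shows "integral\<^sup>L H (\<lambda>V. mon4 V a c b c' a c b c') =
    (if a = b then integral\<^sup>L H (\<lambda>V. mon4 V 0 c 0 c' 0 c 0 c') else integral\<^sup>L H (\<lambda>V. mon4 V 0 c 1 c' 0 c 1 c'))"
proof (cases "a = b")
  case True
  have "0 < m" using assms by simp
  from perm_mono[OF haar sw_bij[of 0 m a], of 0 0 0 0 c c' c c'] this assms True show ?thesis
    by (simp add: sw_def)
next
  case False
  then have m2: "2 \<le> m" using assms by linarith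
  obtain \<sigma> where s: "bij_betw \<sigma> {..<m} {..<m}" "\<sigma> 0 = a" "\<sigma> 1 = b"
    using pair_perm[OF assms(3,4) False m2] by blast
  from perm_mono[OF haar s(1), of 0 1 0 1 c c' c c'] s m2 assms False show ?thesis by simp
qed

lemma Gab:
  assumes "c < m" "c' < m" "a < m" "b < m" "a \<noteq> b"
  shows "integral\<^sup>L H (\<lambda>V. mon4 V a c b c' b c a c') = integral\<^sup>L H (\<lambda>V. mon4 V 0 c 1 c' 1 c 0 c')"
proof -
  have m2: "2 \<le> m" using assms by linarith
  obtain \<sigma> where s: "bij_betw \<sigma> {..<m} {..<m}" "\<sigma> 0 = a" "\<sigma> 1 = b"
    using pair_perm[OF assms(3,4,5) m2] by blast
  from perm_mono[OF haar s(1), of 0 1 1 0 c c' c c'] s m2 assms show ?thesis by simp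
qed

lemma norm4:
  assumes "c < m" "c' < m"
  shows "(\<Sum>a<m. \<Sum>b<m. integral\<^sup>L H (\<lambda>V. mon4 V a c b c' a c b c')) = 1"
proof -
  have "integral\<^sup>L H (\<lambda>V. \<Sum>a<m. \<Sum>b<m. mon4 V a c b c' a c b c') = 1"
  proof (rule H_AE_const'[OF haar])
    show "(\<lambda>V. \<Sum>a<m. \<Sum>b<m. mon4 V a c b c' a c b c') \<in> borel_measurable matspace" by measurable
    fix V assume u: "unitary_mat m V"
    have "(\<Sum>a<m. \<Sum>b<m. mon4 V a c b c' a c b c') = (\<Sum>a<m. \<Sum>b<m. (V a c * cnj (V a c)) * (V b c' * cnj (V b c')))"
      by (intro sum.cong refl) (simp add: mon4_def mult_ac)
    also have "\<dots> = (\<Sum>a<m. V a c * cnj (V a c)) * (\<Sum>b<m. V b c' * cnj (V b c'))"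
      by (simp only: sum_product)
    also have "\<dots> = 1" using col_norm[OF u assms(1)] col_norm[OF u assms(2)] by simp
    finally show "(\<Sum>a<m. \<Sum>b<m. mon4 V a c b c' a c b c') = 1" .
  qed
  then show ?thesis by (simp add: integral_sum2 int_mono[OF haar])
qed

lemma orth4:
  assumes "c < m" "c' < m" "c \<noteq> c'"
  shows "(\<Sum>a<m. \<Sum>b<m. integral\<^sup>L H (\<lambda>V. mon4 V b c a c' a c b c')) = 0"
proof -
  have "integral\<^sup>L H (\<lambda>V. \<Sum>a<m. \<Sum>b<m. mon4 V b c a c' a c b c') = 0"
  proof (rule H_AE_const'[OF haar])
    show "(\<lambda>V. \<Sum>a<m. \<Sum>b<m. mon4 V b c a c' a c b c') \<in> borel_measurable matspace" by measurable
    fix V assume u: "unitary_mat m V"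
    have "(\<Sum>a<m. \<Sum>b<m. mon4 V b c a c' a c b c') = (\<Sum>a<m. \<Sum>b<m. (cnj (V a c) * V a c') * (V b c * cnj (V b c')))"
      by (intro sum.cong refl) (simp add: mon4_def mult_ac)
    also have "\<dots> = (\<Sum>a<m. cnj (V a c) * V a c') * (\<Sum>b<m. V b c * cnj (V b c'))"
      by (simp only: sum_product)
    also have "\<dots> = 0" using col_orth[OF u assms] by simp
    finally show "(\<Sum>a<m. \<Sum>b<m. mon4 V b c a c' a c b c') = 0" .
  qed
  then show ?thesis by (simp add: integral_sum2 int_mono[OF haar])
qed

lemma norm4_eval:
  assumes "c < m" "c' < m"
  shows "of_nat m * integral\<^sup>L H (\<lambda>V. mon4 V 0 c 0 c' 0 c 0 c')
     + of_nat m * (of_nat m - 1) * integral\<^sup>L H (\<lambda>V. mon4 V 0 c 1 c' 0 c 1 c') = 1"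
proof -
  have "(\<Sum>a<m. \<Sum>b<m. integral\<^sup>L H (\<lambda>V. mon4 V a c b c' a c b c'))
      = (\<Sum>a<m. \<Sum>b<m. if a = b then integral\<^sup>L H (\<lambda>V. mon4 V 0 c 0 c' 0 c 0 c') else integral\<^sup>L H (\<lambda>V. mon4 V 0 c 1 c' 0 c 1 c'))"
    by (rule sum.cong[OF refl], rule sum.cong[OF refl], rule Fab) (use assms in auto)
  then show ?thesis using norm4[OF assms] by (simp only: sum_diag_const)
qed

lemma orth4_eval:
  assumes "c < m" "c' < m" "c \<noteq> c'"
  shows "of_nat m * integral\<^sup>L H (\<lambda>V. mon4 V 0 c 0 c' 0 c 0 c')
     + of_nat m * (of_nat m - 1) * integral\<^sup>L H (\<lambda>V. mon4 V 0 c 1 c' 1 c 0 c') = 0"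
proof -
  have "(\<Sum>a<m. \<Sum>b<m. integral\<^sup>L H (\<lambda>V. mon4 V b c a c' a c b c'))
      = (\<Sum>a<m. \<Sum>b<m. if a = b then integral\<^sup>L H (\<lambda>V. mon4 V 0 c 0 c' 0 c 0 c') else integral\<^sup>L H (\<lambda>V. mon4 V 0 c 1 c' 1 c 0 c'))"
  proof (rule sum.cong[OF refl], rule sum.cong[OF refl])
    fix a b assume ab: "a \<in> {..<m}" "b \<in> {..<m}"
    show "integral\<^sup>L H (\<lambda>V. mon4 V b c a c' a c b c') = (if a = b then integral\<^sup>L H (\<lambda>V. mon4 V 0 c 0 c' 0 c 0 c') else integral\<^sup>L H (\<lambda>V. mon4 V 0 c 1 c' 1 c 0 c'))"
    proof (cases "a = b")
      case True
      then show ?thesis using Fab[OF assms(1,2), of a a] ab by simp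
    next
      case False
      then show ?thesis using Gab[OF assms(1,2), of b a] ab by simp
    qed
  qed
  then show ?thesis using orth4[OF assms] by (simp only: sum_diag_const)
qed

lemma had_rel:
  assumes m2: "2 \<le> m" and "c1 < m" "c2 < m" "c3 < m" "c4 < m"
  shows "integral\<^sup>L H (\<lambda>V. mon4 V 0 c1 0 c2 0 c3 0 c4) =
    1/4 * (\<Sum>x<(2::nat). \<Sum>y<(2::nat). \<Sum>z<(2::nat). \<Sum>w<(2::nat). integral\<^sup>L H (\<lambda>V. mon4 V x c1 y c2 z c3 w c4))"
proof -
  have e: "mmult m (hadm m) V 0 c = hs * (V 0 c + V 1 c)" if "c < m" for V c
    using m2 that by (simp add: mmult_hadm)
  have pw: "mon4 (mmult m (hadm m) V) 0 c1 0 c2 0 c3 0 c4 = 1/4 * (\<Sum>x<(2::nat). \<Sum>y<(2::nat). \<Sum>z<(2::nat). \<Sum>w<(2::nat). mon4 V x c1 y c2 z c3 w c4)" for V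
  proof -
    have "mon4 (mmult m (hadm m) V) 0 c1 0 c2 0 c3 0 c4 =
       (hs * hs * hs * hs) * ((V 0 c1 + V 1 c1) * (V 0 c2 + V 1 c2) * (cnj (V 0 c3) + cnj (V 1 c3)) * (cnj (V 0 c4) + cnj (V 1 c4)))"
      using assms by (simp add: mon4_def e mult_ac)
    also have "(V 0 c1 + V 1 c1) * (V 0 c2 + V 1 c2) * (cnj (V 0 c3) + cnj (V 1 c3)) * (cnj (V 0 c4) + cnj (V 1 c4))
        = (\<Sum>x<(2::nat). \<Sum>y<(2::nat). \<Sum>z<(2::nat). \<Sum>w<(2::nat). mon4 V x c1 y c2 z c3 w c4)"
      by (simp only: sum4_2) (simp add: mon4_def algebra_simps)
    finally show ?thesis by (simp only: hs4)
  qed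
  have "integral\<^sup>L H (\<lambda>V. mon4 V 0 c1 0 c2 0 c3 0 c4) = integral\<^sup>L H (\<lambda>V. mon4 (mmult m (hadm m) V) 0 c1 0 c2 0 c3 0 c4)"
    by (rule H_inv[OF haar unitary_hadm[OF m2] meas_mono])
  also have "\<dots> = integral\<^sup>L H (\<lambda>V. 1/4 * (\<Sum>x<(2::nat). \<Sum>y<(2::nat). \<Sum>z<(2::nat). \<Sum>w<(2::nat). mon4 V x c1 y c2 z c3 w c4))"
    by (simp only: pw)
  also have "\<dots> = 1/4 * (\<Sum>x<(2::nat). \<Sum>y<(2::nat). \<Sum>z<(2::nat). \<Sum>w<(2::nat). integral\<^sup>L H (\<lambda>V. mon4 V x c1 y c2 z c3 w c4))"
    by (simp only: integral_mult_right_zero integral_sum4 int_mono[OF haar])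
  finally show ?thesis .
qed

end

lemma meas_tr[measurable]: "(\<lambda>V. mtrace m V) \<in> borel_measurable matspace"
proof -
  have [measurable]: "(\<lambda>V::cmat. V a c) \<in> borel_measurable matspace" for a c by (rule meas_entry)
  show ?thesis unfolding mtrace_def by measurable
qed

lemma tr_bound: "unitary_mat m V \<Longrightarrow> cmod (mtrace m V) \<le> real m"
proof -
  assume u: "unitary_mat m V"
  have "cmod (mtrace m V) \<le> (\<Sum>i<m. cmod (V i i))" unfolding mtrace_def by (rule norm_sum)
  also have "\<dots> \<le> (\<Sum>i<m. 1)" by (intro sum_mono entry_bound[OF u])
  finally show ?thesis by simp
qed

lemma solve_col:
  fixes A B M :: complex
  assumes "A = 1/4 * (A + B + B + B + B + A)" "M * A + M * (M - 1) * B = 1" "M \<noteq> 0" "M + 1 \<noteq> 0"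
  shows "B = 1 / (M * (M + 1))" "A = 2 / (M * (M + 1))"
proof -
  have AB: "A = 2 * B" using assms(1) by (simp add: field_simps)
  then have h: "B * (M * (M + 1)) = 1" using assms(2) by (simp add: algebra_simps)
  have nz: "M * (M + 1) \<noteq> 0" using assms(3,4) by simp
  show B: "B = 1 / (M * (M + 1))" unfolding eq_divide_eq using nz h by simp
  show "A = 2 / (M * (M + 1))" using AB B by simp
qed

lemma solve_two:
  fixes F G P M :: complex
  assumes "F = 1/4 * (F + P + G + G + P + F)" "M * F + M * (M - 1) * P = 1"
    "M * F + M * (M - 1) * G = 0" "M \<noteq> 0" "M + 1 \<noteq> 0" "M - 1 \<noteq> 0"
  shows "P = 1 / ((M + 1) * (M - 1))"
proof -
  have "G * 2 = (F - P) * 2" using assms(1) by (simp add: field_simps)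
  then have G: "G = F - P" by (simp only: mult_cancel_right) simp
  have "M * F + M * (M - 1) * (F - P) = 0" using assms(3) G by simp
  then have "M * M * F = M * (M - 1) * P" by (simp add: algebra_simps)
  then have F: "M * F = (M - 1) * P" using assms(4)
    by (metis (no_types, lifting) mult.assoc mult_left_cancel)
  have "(M - 1) * P + M * (M - 1) * P = 1" using assms(2) F by simp
  then have h: "P * ((M + 1) * (M - 1)) = 1" by (simp add: algebra_simps)
  have nz: "(M + 1) * (M - 1) \<noteq> 0" using assms(5,6) by simp
  show ?thesis unfolding eq_divide_eq using nz h by simp
qed

lemma ofnat_p1: "(of_nat m :: complex) + 1 \<noteq> 0"
proof -
  have "(of_nat m :: complex) + 1 = of_nat (m + 1)" by simp
  moreover have "of_nat (m + 1) \<noteq> (0::complex)" by (simp only: of_nat_eq_0_iff)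
  ultimately show ?thesis by metis
qed

context
  fixes m :: nat and H :: "cmat measure"
  assumes haar: "haar_unitary m H"
begin

lemma kill0:
  assumes "2 \<le> m" "x < 2" "y < 2" "z < 2" "w < 2" "c1 < m" "c2 < m" "c3 < m" "c4 < m"
    "cnt 0 x y \<noteq> cnt 0 z w"
  shows "integral\<^sup>L H (\<lambda>V. mon4 V x c1 y c2 z c3 w c4) = 0"
  using assms by (intro kill_mono[OF haar]) auto

lemma colA:
  assumes m2: "2 \<le> m" and c: "c < m"
  shows "integral\<^sup>L H (\<lambda>V. mon4 V 0 c 0 c 0 c 0 c) = 2 / (of_nat m * (of_nat m + 1))"
proof -
  let ?A = "integral\<^sup>L H (\<lambda>V. mon4 V 0 c 0 c 0 c 0 c)"
  let ?B = "integral\<^sup>L H (\<lambda>V. mon4 V 0 c 1 c 0 c 1 c)"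
  have h: "?A = 1/4 * (\<Sum>x<(2::nat). \<Sum>y<(2::nat). \<Sum>z<(2::nat). \<Sum>w<(2::nat). integral\<^sup>L H (\<lambda>V. mon4 V x c y c z c w c))"
    using had_rel[OF haar m2 c c c c] .
  have p1: "integral\<^sup>L H (\<lambda>V. mon4 V 0 c 1 c 1 c 0 c) = ?B"
    by (rule Bochner_Integration.integral_cong) (auto simp: mon4_def mult_ac)
  have p2: "integral\<^sup>L H (\<lambda>V. mon4 V 1 c 0 c 0 c 1 c) = ?B"
    by (rule Bochner_Integration.integral_cong) (auto simp: mon4_def mult_ac)
  have p3: "integral\<^sup>L H (\<lambda>V. mon4 V 1 c 0 c 1 c 0 c) = ?B"
    by (rule Bochner_Integration.integral_cong) (auto simp: mon4_def mult_ac)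
  have p4: "integral\<^sup>L H (\<lambda>V. mon4 V 1 c 1 c 1 c 1 c) = ?A"
    using perm_mono[OF haar sw_bij[of 0 m 1], of 0 0 0 0 c c c c] m2 c by (simp add: sw_def)
  have h2: "1/4 * (\<Sum>x<(2::nat). \<Sum>y<(2::nat). \<Sum>z<(2::nat). \<Sum>w<(2::nat). integral\<^sup>L H (\<lambda>V. mon4 V x c y c z c w c))
      = 1/4 * (?A + ?B + ?B + ?B + ?B + ?A)"
    unfolding sum4_2 p1 p2 p3 p4 using m2 c by (simp add: kill0 cnt_def)
  have e1: "?A = 1/4 * (?A + ?B + ?B + ?B + ?B + ?A)" by (rule trans[OF h h2])
  have e2: "of_nat m * ?A + of_nat m * (of_nat m - 1) * ?B = 1"
    using norm4_eval[OF haar c c] .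
  show ?thesis using solve_col(2)[OF e1 e2 _ ofnat_p1] m2 by simp
qed

lemma colC:
  assumes m2: "2 \<le> m" and c: "c < m" "c' < m" "c \<noteq> c'"
  shows "integral\<^sup>L H (\<lambda>V. mon4 V 0 c 1 c' 0 c 1 c') = 1 / ((of_nat m + 1) * (of_nat m - 1))"
proof -
  let ?F = "integral\<^sup>L H (\<lambda>V. mon4 V 0 c 0 c' 0 c 0 c')"
  let ?P = "integral\<^sup>L H (\<lambda>V. mon4 V 0 c 1 c' 0 c 1 c')"
  let ?G = "integral\<^sup>L H (\<lambda>V. mon4 V 0 c 1 c' 1 c 0 c')"
  have h: "?F = 1/4 * (\<Sum>x<(2::nat). \<Sum>y<(2::nat). \<Sum>z<(2::nat). \<Sum>w<(2::nat). integral\<^sup>L H (\<lambda>V. mon4 V x c y c' z c w c'))"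
    using had_rel[OF haar m2 c(1) c(2) c(1) c(2)] .
  have p2: "integral\<^sup>L H (\<lambda>V. mon4 V 1 c 0 c' 0 c 1 c') = ?G"
    using perm_mono[OF haar sw_bij[of 0 m 1], of 0 1 1 0 c c' c c'] m2 c by (simp add: sw_def)
  have p3: "integral\<^sup>L H (\<lambda>V. mon4 V 1 c 0 c' 1 c 0 c') = ?P"
    using perm_mono[OF haar sw_bij[of 0 m 1], of 0 1 0 1 c c' c c'] m2 c by (simp add: sw_def)
  have p4: "integral\<^sup>L H (\<lambda>V. mon4 V 1 c 1 c' 1 c 1 c') = ?F"
    using perm_mono[OF haar sw_bij[of 0 m 1], of 0 0 0 0 c c' c c'] m2 c by (simp add: sw_def)
  have h2: "1/4 * (\<Sum>x<(2::nat). \<Sum>y<(2::nat). \<Sum>z<(2::nat). \<Sum>w<(2::nat). integral\<^sup>L H (\<lambda>V. mon4 V x c y c' z c w c'))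
      = 1/4 * (?F + ?P + ?G + ?G + ?P + ?F)"
    unfolding sum4_2 p2 p3 p4 using m2 c by (simp add: kill0 cnt_def)
  have e1: "?F = 1/4 * (?F + ?P + ?G + ?G + ?P + ?F)" by (rule trans[OF h h2])
  have e2: "of_nat m * ?F + of_nat m * (of_nat m - 1) * ?P = 1"
    using norm4_eval[OF haar c(1,2)] .
  have e3: "of_nat m * ?F + of_nat m * (of_nat m - 1) * ?G = 0"
    using orth4_eval[OF haar c] .
  have ne: "(of_nat m :: complex) - 1 \<noteq> 0"
  proof
    assume "(of_nat m :: complex) - 1 = 0"
    then have "(of_nat m :: complex) = of_nat 1" by simp
    then have "m = 1" by (simp only: of_nat_eq_iff)
    then show False using m2 by simp
  qed
  show ?thesis using solve_two[OF e1 e2 e3 _ ofnat_p1 ne] m2 by simp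
qed

end

definition s2v :: "nat \<Rightarrow> real" where "s2v m = (if m = 0 then 0 else 1)"
definition s4v :: "nat \<Rightarrow> real" where "s4v m = (if m = 0 then 0 else if m = 1 then 1 else 2)"

lemma tr_sI: "mtrace m (mmult m (sI m) V) = \<i> * mtrace m V"
  by (simp add: mtrace_def mmult_sI sum_distrib_left)

lemma sum_if_eq': "(\<Sum>k<m. if i = k then X else 0) = (if i < (m::nat) then X else (0::complex))"
  by (induct m) auto

lemma tr_sq_expand: "mtrace m V * cnj (mtrace m V) = (\<Sum>i<m. \<Sum>k<m. mono2 V i i k k)"
  by (simp add: mtrace_def sum_product mono2_def)

lemma tr_4_expand: "(mtrace m V * cnj (mtrace m V))^2 = (\<Sum>i<m. \<Sum>j<m. \<Sum>k<m. \<Sum>l<m. mon4 V i i j j k k l l)"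
proof -
  have "(mtrace m V * cnj (mtrace m V))^2 = (mtrace m V * mtrace m V) * (cnj (mtrace m V) * cnj (mtrace m V))"
    by (simp add: power2_eq_square mult_ac)
  also have "mtrace m V * mtrace m V = (\<Sum>i<m. \<Sum>j<m. V i i * V j j)"
    by (simp add: mtrace_def sum_product)
  also have "cnj (mtrace m V) * cnj (mtrace m V) = (\<Sum>k<m. \<Sum>l<m. cnj (V k k) * cnj (V l l))"
    by (simp add: mtrace_def sum_product)
  also have "(\<Sum>i<m. \<Sum>j<m. V i i * V j j) * (\<Sum>k<m. \<Sum>l<m. cnj (V k k) * cnj (V l l))
      = (\<Sum>i<m. \<Sum>j<m. \<Sum>k<m. \<Sum>l<m. (V i i * V j j) * (cnj (V k k) * cnj (V l l)))"
    by (simp only: sum_distrib_right) (simp only: sum_distrib_left)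
  finally show ?thesis by (simp add: mon4_def mult_ac)
qed

lemma multiset2:
  assumes "cnt i i j = cnt i k l" "cnt j i j = cnt j k l" "cnt k i j = cnt k k l"
  shows "(k = i \<and> l = j) \<or> (k = j \<and> l = i)"
  using assms unfolding cnt_def by (cases "k = i"; cases "l = j"; cases "k = j"; cases "l = i"; simp)

context
  fixes m :: nat and H :: "cmat measure"
  assumes haar: "haar_unitary m H"
begin

lemma tr2:
  assumes m1: "1 \<le> m"
  shows "integral\<^sup>L H (\<lambda>V. mtrace m V * cnj (mtrace m V)) = 1"
proof -
  have "integral\<^sup>L H (\<lambda>V. mtrace m V * cnj (mtrace m V)) = (\<Sum>i<m. \<Sum>k<m. integral\<^sup>L H (\<lambda>V. mono2 V i i k k))"
    by (simp only: tr_sq_expand integral_sum2[OF haar int_mono2[OF haar]])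
  also have "\<dots> = (\<Sum>i<m. \<Sum>k<m. if i = k then 1 / of_nat m else 0)"
  proof (rule sum.cong[OF refl], rule sum.cong[OF refl])
    fix i k assume ik: "i \<in> {..<m}" "k \<in> {..<m}"
    show "integral\<^sup>L H (\<lambda>V. mono2 V i i k k) = (if i = k then 1 / of_nat m else 0)"
    proof (cases "i = k")
      case True then show ?thesis using col2[OF haar, of i i] ik by simp
    next
      case False then show ?thesis using kill_mono2[OF haar, of i k i k] ik by simp
    qed
  qed
  also have "\<dots> = (\<Sum>i<m. 1 / of_nat m)" by (simp add: sum_if_eq')
  also have "\<dots> = 1" using m1 by simp
  finally show ?thesis .
qed

lemma tr4:
  assumes m2: "2 \<le> m"
  shows "integral\<^sup>L H (\<lambda>V. (mtrace m V * cnj (mtrace m V))^2) = 2"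
proof -
  define M :: complex where "M = of_nat m"
  define A0 where "A0 = 2 / (M * (M + 1))"
  define C0 where "C0 = 1 / ((M + 1) * (M - 1))"
  have "integral\<^sup>L H (\<lambda>V. (mtrace m V * cnj (mtrace m V))^2) =
      (\<Sum>i<m. \<Sum>j<m. \<Sum>k<m. \<Sum>l<m. integral\<^sup>L H (\<lambda>V. mon4 V i i j j k k l l))"
    by (simp only: tr_4_expand integral_sum4[OF haar int_mono[OF haar]])
  also have "\<dots> = (\<Sum>i<m. \<Sum>j<m. if i = j then A0 else 2 * C0)"
  proof (rule sum.cong[OF refl], rule sum.cong[OF refl])
    fix i j assume ij: "i \<in> {..<m}" "j \<in> {..<m}"
    let ?X = "integral\<^sup>L H (\<lambda>V. mon4 V i i j j i i j j)"
    have T: "integral\<^sup>L H (\<lambda>V. mon4 V i i j j k k l l) = (if (k = i \<and> l = j) \<or> (k = j \<and> l = i) then ?X else 0)"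
      if kl: "k < m" "l < m" for k l
    proof (cases "(k = i \<and> l = j) \<or> (k = j \<and> l = i)")
      case True
      then show ?thesis
      proof
        assume "k = i \<and> l = j" then show ?thesis by simp
      next
        assume a: "k = j \<and> l = i"
        have "integral\<^sup>L H (\<lambda>V. mon4 V i i j j k k l l) = ?X"
          using a by (intro Bochner_Integration.integral_cong) (auto simp: mon4_def mult_ac)
        then show ?thesis using True by simp
      qed
    next
      case False
      then have "cnt i i j \<noteq> cnt i k l \<or> cnt j i j \<noteq> cnt j k l \<or> cnt k i j \<noteq> cnt k k l"
        using multiset2 by blast
      then have "integral\<^sup>L H (\<lambda>V. mon4 V i i j j k k l l) = 0"
        using ij kl by (elim disjE) (rule kill_mono[OF haar]; simp)+
      then show ?thesis by (simp only: if_not_P[OF False])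
    qed
    have "(\<Sum>k<m. \<Sum>l<m. integral\<^sup>L H (\<lambda>V. mon4 V i i j j k k l l))
        = (\<Sum>k<m. \<Sum>l<m. if (k = i \<and> l = j) \<or> (k = j \<and> l = i) then ?X else 0)"
      by (rule sum.cong[OF refl], rule sum.cong[OF refl], rule T) auto
    also have "\<dots> = (if i = j then ?X else 2 * ?X)" using sum_pairs ij by simp
    also have "\<dots> = (if i = j then A0 else 2 * C0)"
    proof (cases "i = j")
      case True
      have "?X = integral\<^sup>L H (\<lambda>V. mon4 V 0 i 0 i 0 i 0 i)"
        using Fab[OF haar, of i i i i] ij True by simp
      also have "\<dots> = A0" unfolding A0_def M_def using colA[OF haar m2, of i] ij by simp
      finally show ?thesis using True by simp
    next
      case False
      have "?X = integral\<^sup>L H (\<lambda>V. mon4 V 0 i 1 j 0 i 1 j)"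
        using Fab[OF haar, of i j i j] ij False by simp
      also have "\<dots> = C0" unfolding C0_def M_def using colC[OF haar m2, of i j] ij False by simp
      finally show ?thesis using False by simp
    qed
    finally show "(\<Sum>k<m. \<Sum>l<m. integral\<^sup>L H (\<lambda>V. mon4 V i i j j k k l l)) = (if i = j then A0 else 2 * C0)" .
  qed
  also have "\<dots> = M * A0 + M * (M - 1) * (2 * C0)" unfolding M_def by (rule sum_diag_const)
  also have "\<dots> = 2"
  proof -
    have nz1: "M \<noteq> 0" "M + 1 \<noteq> 0" unfolding M_def using m2 ofnat_p1 by auto
    have nz2: "M - 1 \<noteq> 0"
    proof
      assume "M - 1 = 0"
      then have "(of_nat m :: complex) = of_nat 1" unfolding M_def by simp
      then have "m = 1" by (simp only: of_nat_eq_iff)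
      then show False using m2 by simp
    qed
    have a: "M * (2 / (M * (M + 1))) = 2 / (M + 1)" using nz1 by simp
    have b: "M * (M - 1) * (2 * (1 / ((M + 1) * (M - 1)))) = 2 * M / (M + 1)" using nz1 nz2 by simp
    have c: "2 / (M + 1) + 2 * M / (M + 1) = 2" using nz1 nz2 by (simp add: add_divide_distrib[symmetric] divide_eq_eq algebra_simps)
    show ?thesis unfolding A0_def C0_def using a b c by simp
  qed
  finally show ?thesis .
qed

lemma tr4_1:
  assumes "m = 1"
  shows "integral\<^sup>L H (\<lambda>V. (mtrace m V * cnj (mtrace m V))^2) = 1"
proof (rule H_AE_const'[OF haar])
  fix V assume u: "unitary_mat m V"
  have "mtrace m V * cnj (mtrace m V) = V 0 0 * cnj (V 0 0)" using assms by (simp add: mtrace_def)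
  also have "\<dots> = 1" using col_norm[OF u, of 0] assms by simp
  finally show "(mtrace m V * cnj (mtrace m V))^2 = 1" by simp
qed measurable

lemma trm1: "integral\<^sup>L H (\<lambda>V. mtrace m V) = 0"
  by (rule kill[OF haar unitary_sI meas_tr, where z=\<i>]) (simp_all add: tr_sI)
lemma trm2: "integral\<^sup>L H (\<lambda>V. (mtrace m V)^2) = 0"
  by (rule kill[OF haar unitary_sI, where z="-1"]) (simp_all add: tr_sI power_mult_distrib)
lemma trm3: "integral\<^sup>L H (\<lambda>V. mtrace m V * cnj (mtrace m V) * mtrace m V) = 0"
  by (rule kill[OF haar unitary_sI, where z="\<i>"]) (simp_all add: tr_sI algebra_simps)

lemma real_mom2: "integral\<^sup>L H (\<lambda>V. cmod (mtrace m V)^2) = s2v m"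
proof -
  have "complex_of_real (integral\<^sup>L H (\<lambda>V. cmod (mtrace m V)^2)) = integral\<^sup>L H (\<lambda>V. mtrace m V * cnj (mtrace m V))"
    by (simp only: integral_complex_of_real[symmetric] complex_norm_square)
  also have "\<dots> = complex_of_real (s2v m)"
  proof (cases "m = 0")
    case True then show ?thesis by (simp add: mtrace_def s2v_def)
  next
    case False then show ?thesis using tr2 by (simp add: s2v_def)
  qed
  finally show ?thesis by (simp only: of_real_eq_iff)
qed

lemma real_mom4: "integral\<^sup>L H (\<lambda>V. cmod (mtrace m V)^4) = s4v m"
proof -
  have "complex_of_real (integral\<^sup>L H (\<lambda>V. cmod (mtrace m V)^4)) = integral\<^sup>L H (\<lambda>V. (mtrace m V * cnj (mtrace m V))^2)"
    by (simp only: integral_complex_of_real[symmetric] cmod4)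
  also have "\<dots> = complex_of_real (s4v m)"
  proof (cases "m = 0")
    case True then show ?thesis by (simp add: mtrace_def s4v_def)
  next
    case False
    show ?thesis
    proof (cases "m = 1")
      case True then show ?thesis using tr4_1 by (simp add: s4v_def)
    next
      case False2: False
      then have "2 \<le> m" using False by simp
      then show ?thesis using tr4 False False2 by (simp add: s4v_def)
    qed
  qed
  finally show ?thesis by (simp only: of_real_eq_iff)
qed

lemma haar_quartic:
  assumes u: "unitary_mat m V"
  shows "(\<integral>\<^sup>+V'. ennreal (cmod (x + mtrace m (mmult m (madj m V) V')) ^ 4) \<partial>H)
       = ennreal (cmod x ^ 4 + 4 * cmod x ^ 2 * s2v m + s4v m)"
proof -
  have meas: "(\<lambda>W. ennreal (cmod (x + mtrace m W) ^ 4)) \<in> borel_measurable matspace" by measurable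
  have meas2: "(\<lambda>V'. ennreal (cmod (x + mtrace m (mmult m (madj m V) V')) ^ 4)) \<in> borel_measurable matspace"
    using measurable_compose[OF mmult_meas[OF haar] meas] .
  have "(\<integral>\<^sup>+V'. ennreal (cmod (x + mtrace m (mmult m (madj m V) V')) ^ 4) \<partial>H)
      = (\<integral>\<^sup>+V'. ennreal (cmod (x + mtrace m (mmult m (madj m V) (mmult m V V'))) ^ 4) \<partial>H)"
    by (rule H_inv_nn[OF haar u meas2])
  also have "\<dots> = (\<integral>\<^sup>+V'. ennreal (cmod (x + mtrace m V') ^ 4) \<partial>H)"
    by (simp only: trace_unitary_cancel[OF u])
  also have "\<dots> = ennreal (cmod x ^ 4 + 4 * cmod x ^ 2 * integral\<^sup>L H (\<lambda>V. cmod (mtrace m V) ^ 2)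
              + integral\<^sup>L H (\<lambda>V. cmod (mtrace m V) ^ 4))"
  proof (rule quartic_mean[OF H_prob[OF haar] H_measI[OF haar meas_tr]])
    show "AE V in H. cmod (mtrace m V) \<le> real m"
      using H_AE[OF haar] by (auto elim: AE_mp intro: tr_bound)
  qed (rule trm1, rule trm2, rule trm3)
  also have "\<dots> = ennreal (cmod x ^ 4 + 4 * cmod x ^ 2 * s2v m + s4v m)"
    by (simp only: real_mom2 real_mom4)
  finally show ?thesis .
qed

end

abbreviation U :: "real measure" where "U \<equiv> uniform_measure lborel {0..<2*pi}"

lemma U_prob: "prob_space U"
  by (rule prob_space_uniform_measure) simp_all

lemma U_eq: "U = density lborel (\<lambda>x. ennreal (indicator {0..<2*pi} x / (2*pi)))"
  unfolding uniform_measure_def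
  by (intro arg_cong[where f="density lborel"] ext) (simp add: divide_ennreal ennreal_indicator[symmetric])

lemma int_exp_U:
  assumes k: "k \<noteq> 0"
  shows "integral\<^sup>L U (\<lambda>y. exp (\<i> * of_nat k * complex_of_real y)) = 0"
proof -
  let ?f = "\<lambda>y::real. exp (\<i> * of_nat k * complex_of_real y)"
  let ?g = "\<lambda>z::complex. exp (\<i> * of_nat k * z) / (\<i> * of_nat k)"
  have fm: "?f \<in> borel_measurable lborel" by measurable
  have "integral\<^sup>L U ?f = integral\<^sup>L lborel (\<lambda>x. (indicator {0..<2*pi} x / (2*pi)) *\<^sub>R ?f x)"
    unfolding U_eq by (rule integral_density) (auto simp: fm)
  also have "\<dots> = integral\<^sup>L lborel (\<lambda>x. (1/(2*pi)) *\<^sub>R (indicator {0..2*pi} x *\<^sub>R ?f x))"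
  proof (rule integral_cong_AE)
    show "AE x in lborel. (indicator {0..<2*pi} x / (2*pi)) *\<^sub>R ?f x = (1/(2*pi)) *\<^sub>R (indicator {0..2*pi} x *\<^sub>R ?f x)"
      using AE_lborel_singleton[of "2*pi"] by eventually_elim (auto simp: indicator_def)
  qed measurable
  also have "\<dots> = (1/(2*pi)) *\<^sub>R integral\<^sup>L lborel (\<lambda>x. indicator {0..2*pi} x *\<^sub>R ?f x)"
    by (rule integral_scaleR_right)
  also have "integral\<^sup>L lborel (\<lambda>x. indicator {0..2*pi} x *\<^sub>R ?f x) = ?g (of_real (2*pi)) - ?g (of_real 0)"
  proof (rule integral_FTC_atLeastAtMost)
    show "0 \<le> 2 * pi" by simp
    fix x :: real
    have "(?g has_field_derivative ?f x) (at (of_real x))"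
      using k by (auto intro!: derivative_eq_intros simp: field_simps)
    then show "((\<lambda>x. ?g (of_real x)) has_vector_derivative ?f x) (at x within {0..2*pi})"
      by (rule has_vector_derivative_real_field)
  next
    show "continuous_on {0..2*pi} ?f" by (intro continuous_intros)
  qed
  also have "?g (of_real (2*pi)) - ?g (of_real 0) = 0"
  proof -
    have "exp (\<i> * of_nat k * complex_of_real (2*pi)) = exp (2 * of_real pi * \<i>) ^ k"
      by (simp add: exp_of_nat_mult[symmetric] mult_ac)
    then show ?thesis by simp
  qed
  finally show ?thesis by simp
qed

lemma int_expT:
  "integral\<^sup>L U (\<lambda>y. c * exp (\<i> * complex_of_real y)) = 0"
  "integral\<^sup>L U (\<lambda>y. (c * exp (\<i> * complex_of_real y))^2) = 0"
proof -
  have "integral\<^sup>L U (\<lambda>y. exp (\<i> * complex_of_real y)) = 0"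
    using int_exp_U[of 1] by simp
  then show "integral\<^sup>L U (\<lambda>y. c * exp (\<i> * complex_of_real y)) = 0" by simp
  have e: "(c * exp (\<i> * complex_of_real y))^2 = c^2 * exp (\<i> * of_nat 2 * complex_of_real y)" for y
    by (simp add: power_mult_distrib exp_of_nat_mult[symmetric] mult_ac)
  show "integral\<^sup>L U (\<lambda>y. (c * exp (\<i> * complex_of_real y))^2) = 0"
    unfolding e using int_exp_U[of 2] by simp
qed

lemma quad_mean:
  fixes T :: "'a \<Rightarrow> complex" and x :: complex
  assumes P: "prob_space \<mu>" and Tm[measurable]: "T \<in> borel_measurable \<mu>"
    and bnd: "AE \<omega> in \<mu>. cmod (T \<omega>) \<le> B"
    and m1: "integral\<^sup>L \<mu> T = 0"
  shows "(\<integral>\<^sup>+\<omega>. ennreal (cmod (x + T \<omega>) ^ 2) \<partial>\<mu>) =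
     ennreal (cmod x ^ 2 + integral\<^sup>L \<mu> (\<lambda>\<omega>. cmod (T \<omega>) ^ 2))"
proof -
  interpret prob_space \<mu> by fact
  have intT: "integrable \<mu> T"
    using bnd by (intro integrable_const_bound[where B=B]) auto
  have intT2: "integrable \<mu> (\<lambda>\<omega>. T \<omega> * cnj (T \<omega>))"
  proof (rule integrable_const_bound[where B="B*B"])
    show "AE \<omega> in \<mu>. norm (T \<omega> * cnj (T \<omega>)) \<le> B * B"
      using bnd
    proof eventually_elim
      case (elim \<omega>)
      have "0 \<le> B" using elim norm_ge_zero[of "T \<omega>"] by linarith
      then show ?case using elim by (simp add: norm_mult mult_mono)
    qed
  qed measurable
  have eq: "complex_of_real (cmod (x + T \<omega>) ^ 2) = x * cnj x + x * cnj (T \<omega>) + cnj x * T \<omega> + T \<omega> * cnj (T \<omega>)" for \<omega>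
    by (simp only: complex_norm_square) (simp add: algebra_simps)
  have "complex_of_real (integral\<^sup>L \<mu> (\<lambda>\<omega>. cmod (x + T \<omega>) ^ 2))
      = integral\<^sup>L \<mu> (\<lambda>\<omega>. x * cnj x + x * cnj (T \<omega>) + cnj x * T \<omega> + T \<omega> * cnj (T \<omega>))"
    by (simp only: eq integral_complex_of_real[symmetric])
  also have "\<dots> = x * cnj x + x * cnj (integral\<^sup>L \<mu> T) + cnj x * integral\<^sup>L \<mu> T + integral\<^sup>L \<mu> (\<lambda>\<omega>. T \<omega> * cnj (T \<omega>))"
    using intT intT2 by (simp add: prob_space)
  also have "\<dots> = complex_of_real (cmod x ^ 2 + integral\<^sup>L \<mu> (\<lambda>\<omega>. cmod (T \<omega>) ^ 2))"
  proof -
    have "integral\<^sup>L \<mu> (\<lambda>\<omega>. T \<omega> * cnj (T \<omega>)) = integral\<^sup>L \<mu> (\<lambda>\<omega>. complex_of_real (cmod (T \<omega>) ^ 2))"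
      by (simp only: complex_norm_square)
    also have "\<dots> = complex_of_real (integral\<^sup>L \<mu> (\<lambda>\<omega>. cmod (T \<omega>) ^ 2))"
      by (rule integral_complex_of_real)
    finally have "integral\<^sup>L \<mu> (\<lambda>\<omega>. T \<omega> * cnj (T \<omega>)) = complex_of_real (integral\<^sup>L \<mu> (\<lambda>\<omega>. cmod (T \<omega>) ^ 2))" .
    moreover have "x * cnj x = complex_of_real (cmod x ^ 2)" by (simp only: complex_norm_square)
    ultimately show ?thesis using m1 by simp
  qed
  finally have R: "integral\<^sup>L \<mu> (\<lambda>\<omega>. cmod (x + T \<omega>) ^ 2) = cmod x ^ 2 + integral\<^sup>L \<mu> (\<lambda>\<omega>. cmod (T \<omega>) ^ 2)"
    by (simp only: of_real_eq_iff)
  have "integrable \<mu> (\<lambda>\<omega>. cmod (x + T \<omega>) ^ 2)"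
  proof (rule integrable_const_bound[where B="(cmod x + B) ^ 2"])
    show "AE \<omega> in \<mu>. norm (cmod (x + T \<omega>) ^ 2) \<le> (cmod x + B) ^ 2"
      using bnd
    proof eventually_elim
      case (elim \<omega>)
      have "cmod (x + T \<omega>) \<le> cmod x + B" using norm_triangle_ineq[of x "T \<omega>"] elim by linarith
      then show ?case by (simp add: power_mono)
    qed
  qed measurable
  then have "(\<integral>\<^sup>+\<omega>. ennreal (cmod (x + T \<omega>) ^ 2) \<partial>\<mu>) = ennreal (integral\<^sup>L \<mu> (\<lambda>\<omega>. cmod (x + T \<omega>) ^ 2))"
    by (intro nn_integral_eq_integral) auto
  then show ?thesis using R by simp
qed

definition Phi :: "nat \<Rightarrow> (nat \<Rightarrow> real) measure" where
  "Phi N = PiM {..<N} (\<lambda>_. U)"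
definition XN :: "nat \<Rightarrow> (nat \<Rightarrow> complex) \<Rightarrow> (nat \<Rightarrow> real) \<Rightarrow> complex" where
  "XN N c \<phi> = (\<Sum>j<N. c j * exp (\<i> * complex_of_real (\<phi> j)))"

lemma Phi_prob: "prob_space (Phi N)"
  unfolding Phi_def by (intro prob_space_PiM U_prob)

lemma XN_meas[measurable]: "XN N c \<in> borel_measurable (Phi N)"
proof -
  have [measurable]: "(\<lambda>\<phi>. \<phi> j) \<in> borel_measurable (PiM {..<N} (\<lambda>_. U))" if "j < N" for j
    using that by (intro measurable_component_singleton[where M="\<lambda>_. U", THEN measurable_compose]) (auto simp: sets_uniform_measure)
  show ?thesis unfolding XN_def[abs_def] Phi_def by measurable
qed

lemma nn_poly:
  assumes P: "prob_space M" and p: "p \<in> borel_measurable M" and q: "q \<in> borel_measurable M"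
    and pn: "\<And>x. 0 \<le> p x" and qn: "\<And>x. 0 \<le> q x" and "0 \<le> (k::real)" "0 \<le> (r::real)"
  shows "(\<integral>\<^sup>+x. ennreal (p x + k * q x + r) \<partial>M) = (\<integral>\<^sup>+x. ennreal (p x) \<partial>M) + ennreal k * (\<integral>\<^sup>+x. ennreal (q x) \<partial>M) + ennreal r"
proof -
  interpret prob_space M by fact
  have "(\<integral>\<^sup>+x. ennreal (p x + k * q x + r) \<partial>M) = (\<integral>\<^sup>+x. ennreal (p x) + ennreal k * ennreal (q x) + ennreal r \<partial>M)"
    using pn qn assms(6,7) by (intro nn_integral_cong) (simp add: ennreal_plus ennreal_mult)
  also have "\<dots> = (\<integral>\<^sup>+x. ennreal (p x) \<partial>M) + (\<integral>\<^sup>+x. ennreal k * ennreal (q x) \<partial>M) + (\<integral>\<^sup>+x. ennreal r \<partial>M)"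
    using p q by (simp add: nn_integral_add)
  also have "\<dots> = (\<integral>\<^sup>+x. ennreal (p x) \<partial>M) + ennreal k * (\<integral>\<^sup>+x. ennreal (q x) \<partial>M) + ennreal r"
    using q by (simp add: nn_integral_cmult emeasure_space_1)
  finally show ?thesis .
qed

lemma Tphase:
  assumes c: "cmod c0 = 1"
  shows "(\<integral>\<^sup>+y. ennreal (cmod (a + c0 * exp (\<i> * complex_of_real y)) ^ 4) \<partial>U) = ennreal (cmod a ^ 4 + 4 * cmod a ^ 2 + 1)"
    and "(\<integral>\<^sup>+y. ennreal (cmod (a + c0 * exp (\<i> * complex_of_real y)) ^ 2) \<partial>U) = ennreal (cmod a ^ 2 + 1)"
proof -
  interpret prob_space U by (rule U_prob)
  let ?T = "\<lambda>y::real. c0 * exp (\<i> * complex_of_real y)"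
  have n1: "cmod (?T y) = 1" for y using c by (simp add: norm_mult)
  have Tm: "?T \<in> borel_measurable U" by measurable
  have bnd: "AE y in U. cmod (?T y) \<le> 1" using n1 by simp
  have i2: "integral\<^sup>L U (\<lambda>y. cmod (?T y) ^ 2) = 1" using n1 by (simp add: prob_space)
  have i4: "integral\<^sup>L U (\<lambda>y. cmod (?T y) ^ 4) = 1" using n1 by (simp add: prob_space)
  have m3: "integral\<^sup>L U (\<lambda>y. ?T y * cnj (?T y) * ?T y) = 0"
  proof -
    have "?T y * cnj (?T y) = 1" for y
    proof -
      have "?T y * cnj (?T y) = complex_of_real (cmod (?T y) ^ 2)" by (simp only: complex_norm_square)
      then show ?thesis using n1 by simp
    qed
    then have "integral\<^sup>L U (\<lambda>y. ?T y * cnj (?T y) * ?T y) = integral\<^sup>L U ?T" by simp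
    then show ?thesis using int_expT(1) by simp
  qed
  show "(\<integral>\<^sup>+y. ennreal (cmod (a + ?T y) ^ 4) \<partial>U) = ennreal (cmod a ^ 4 + 4 * cmod a ^ 2 + 1)"
    using quartic_mean[OF U_prob Tm bnd int_expT(1) int_expT(2) m3, of a] i2 i4 by simp
  show "(\<integral>\<^sup>+y. ennreal (cmod (a + ?T y) ^ 2) \<partial>U) = ennreal (cmod a ^ 2 + 1)"
    using quad_mean[OF U_prob Tm bnd int_expT(1), of a] i2 by simp
qed

lemma nat_sq_ge: "real N \<le> 2 * real N ^ 2"
proof -
  have "N \<le> 2 * N ^ 2" by (cases N) (auto simp: power2_eq_square)
  then have "real N \<le> real (2 * N ^ 2)" by (simp only: of_nat_le_iff)
  then show ?thesis by simp
qed

lemma phase_moments: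
  assumes c: "\<And>j. cmod (c j) = 1"
  shows "(\<integral>\<^sup>+\<phi>. ennreal (cmod (XN N c \<phi>) ^ 2) \<partial>Phi N) = ennreal (real N) \<and>
         (\<integral>\<^sup>+\<phi>. ennreal (cmod (XN N c \<phi>) ^ 4) \<partial>Phi N) = ennreal (2 * real N ^ 2 - real N)"
proof (induction N)
  case 0
  interpret prob_space "Phi 0" by (rule Phi_prob)
  show ?case by (simp add: XN_def)
next
  case (Suc N)
  interpret P: product_sigma_finite "\<lambda>_::nat. U"
    by (simp add: product_sigma_finite_def prob_space_imp_sigma_finite U_prob)
  interpret PN: prob_space "Phi N" by (rule Phi_prob)
  have ins: "{..<Suc N} = insert N {..<N}" by auto
  have upd: "XN (Suc N) c (x(N := y)) = XN N c x + c N * exp (\<i> * complex_of_real y)" for x y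
  proof -
    have "XN (Suc N) c (x(N := y)) = (\<Sum>j<N. c j * exp (\<i> * complex_of_real ((x(N := y)) j))) + c N * exp (\<i> * complex_of_real y)"
      by (simp add: XN_def)
    also have "(\<Sum>j<N. c j * exp (\<i> * complex_of_real ((x(N := y)) j))) = XN N c x"
      unfolding XN_def by (intro sum.cong) auto
    finally show ?thesis .
  qed
  have mX: "XN (Suc N) c \<in> borel_measurable (PiM (insert N {..<N}) (\<lambda>_. U))"
    using XN_meas[of "Suc N" c] unfolding Phi_def ins .
  have mXN: "XN N c \<in> borel_measurable (PiM {..<N} (\<lambda>_. U))"
    using XN_meas[of N c] unfolding Phi_def .
  have pos4: "(\<integral>\<^sup>+\<phi>. ennreal (cmod (XN (Suc N) c \<phi>) ^ 4) \<partial>Phi (Suc N))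
      = (\<integral>\<^sup>+x. ennreal (cmod (XN N c x) ^ 4 + 4 * cmod (XN N c x) ^ 2 + 1) \<partial>Phi N)"
  proof -
    have "(\<integral>\<^sup>+\<phi>. ennreal (cmod (XN (Suc N) c \<phi>) ^ 4) \<partial>Phi (Suc N))
        = (\<integral>\<^sup>+x. (\<integral>\<^sup>+y. ennreal (cmod (XN (Suc N) c (x(N := y))) ^ 4) \<partial>U) \<partial>Phi N)"
      unfolding Phi_def ins by (rule P.product_nn_integral_insert) (use mX in auto)
    also have "\<dots> = (\<integral>\<^sup>+x. ennreal (cmod (XN N c x) ^ 4 + 4 * cmod (XN N c x) ^ 2 + 1) \<partial>Phi N)"
      by (simp only: upd Tphase(1)[OF c])
    finally show ?thesis .
  qed
  have pos2: "(\<integral>\<^sup>+\<phi>. ennreal (cmod (XN (Suc N) c \<phi>) ^ 2) \<partial>Phi (Suc N))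
      = (\<integral>\<^sup>+x. ennreal (cmod (XN N c x) ^ 2 + 1) \<partial>Phi N)"
  proof -
    have "(\<integral>\<^sup>+\<phi>. ennreal (cmod (XN (Suc N) c \<phi>) ^ 2) \<partial>Phi (Suc N))
        = (\<integral>\<^sup>+x. (\<integral>\<^sup>+y. ennreal (cmod (XN (Suc N) c (x(N := y))) ^ 2) \<partial>U) \<partial>Phi N)"
      unfolding Phi_def ins by (rule P.product_nn_integral_insert) (use mX in auto)
    also have "\<dots> = (\<integral>\<^sup>+x. ennreal (cmod (XN N c x) ^ 2 + 1) \<partial>Phi N)"
      by (simp only: upd Tphase(2)[OF c])
    finally show ?thesis .
  qed
  have e4: "(\<integral>\<^sup>+x. ennreal (cmod (XN N c x) ^ 4 + 4 * cmod (XN N c x) ^ 2 + 1) \<partial>Phi N)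
      = ennreal (2 * real N ^ 2 - real N) + ennreal 4 * ennreal (real N) + ennreal 1"
    using nn_poly[OF Phi_prob[of N], where p="\<lambda>x. cmod (XN N c x) ^ 4" and q="\<lambda>x. cmod (XN N c x) ^ 2" and k=4 and r=1] Suc.IH
    by simp
  have e2: "(\<integral>\<^sup>+x. ennreal (cmod (XN N c x) ^ 2 + 1) \<partial>Phi N) = ennreal (real N) + ennreal 1"
  proof -
    have "(\<integral>\<^sup>+x. ennreal (cmod (XN N c x) ^ 2 + 1) \<partial>Phi N) = (\<integral>\<^sup>+x. ennreal (cmod (XN N c x) ^ 2) + ennreal 1 \<partial>Phi N)"
      by (intro nn_integral_cong) (simp add: ennreal_plus)
    also have "\<dots> = (\<integral>\<^sup>+x. ennreal (cmod (XN N c x) ^ 2) \<partial>Phi N) + ennreal 1"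
      by (simp add: nn_integral_add PN.emeasure_space_1)
    finally show ?thesis using Suc.IH by simp
  qed
  have "ennreal (2 * real N ^ 2 - real N) + ennreal 4 * ennreal (real N) + ennreal 1
      = ennreal (2 * real (Suc N) ^ 2 - real (Suc N))"
  proof -
    have a0: "0 \<le> 2 * real N ^ 2 - real N" using nat_sq_ge[of N] by simp
    have m4: "ennreal 4 * ennreal (real N) = ennreal (4 * real N)" by (simp add: ennreal_mult)
    have s1: "ennreal (2 * real N ^ 2 - real N + 4 * real N) = ennreal (2 * real N ^ 2 - real N) + ennreal (4 * real N)"
      by (rule ennreal_plus) (use a0 in auto)
    have s2: "ennreal (2 * real N ^ 2 - real N + 4 * real N + 1) = ennreal (2 * real N ^ 2 - real N + 4 * real N) + ennreal 1"
      by (rule ennreal_plus) (use a0 in auto)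
    have "ennreal (2 * real N ^ 2 - real N) + ennreal 4 * ennreal (real N) + ennreal 1
        = ennreal (2 * real N ^ 2 - real N + 4 * real N + 1)"
      by (simp only: m4 s1 s2)
    also have "2 * real N ^ 2 - real N + 4 * real N + 1 = 2 * real (Suc N) ^ 2 - real (Suc N)"
      by (simp add: power2_eq_square algebra_simps)
    finally show ?thesis .
  qed
  moreover have "ennreal (real N) + ennreal 1 = ennreal (real (Suc N))"
    by (simp add: ennreal_plus[symmetric])
  ultimately show ?case using pos4 pos2 e4 e2 by simp
qed

lemma sum_split_N: "(\<Sum>i<N+k. f i) = (\<Sum>i<N. f i) + (\<Sum>a<k. f (N + a) :: complex)" for N k :: nat
  by (induct k) (simp_all add: ac_simps)

lemma tr_adj: "mtrace d (mmult d (madj d A) B) = (\<Sum>i<d. \<Sum>k<d. cnj (A k i) * B k i)"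
  unfolding mtrace_def
  by (rule sum.cong[OF refl]) (auto simp: mmult_def madj_def intro!: sum.cong)

lemma blk_tr:
  assumes Nd: "N \<le> d"
  shows "mtrace d (mmult d (madj d (blockU d N \<phi> V)) (blockU d N \<phi>' V'))
       = XN N (\<lambda>j. cnj (exp (\<i> * complex_of_real (\<phi> j)))) \<phi>' + mtrace (d - N) (mmult (d - N) (madj (d - N) V) V')"
proof -
  define m where "m = d - N"
  have d: "d = N + m" using Nd unfolding m_def by simp
  let ?B = "blockU d N \<phi> V" and ?B' = "blockU d N \<phi>' V'"
  let ?h = "\<lambda>i k. cnj (?B k i) * ?B' k i"
  have "mtrace d (mmult d (madj d ?B) ?B') = (\<Sum>i<N+m. \<Sum>k<N+m. ?h i k)"
    unfolding tr_adj d ..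
  also have "\<dots> = (\<Sum>i<N. \<Sum>k<N+m. ?h i k) + (\<Sum>a<m. \<Sum>k<N+m. ?h (N+a) k)"
    by (rule sum_split_N)
  also have "(\<Sum>i<N. \<Sum>k<N+m. ?h i k) = (\<Sum>i<N. cnj (exp (\<i> * complex_of_real (\<phi> i))) * exp (\<i> * complex_of_real (\<phi>' i)))"
  proof (rule sum.cong[OF refl])
    fix i assume i: "i \<in> {..<N}"
    have "(\<Sum>k<N+m. ?h i k) = (\<Sum>k<N. ?h i k) + (\<Sum>b<m. ?h i (N+b))" by (rule sum_split_N)
    also have "(\<Sum>b<m. ?h i (N+b)) = 0" using i by (intro sum.neutral) (auto simp: blockU_def)
    also have "(\<Sum>k<N. ?h i k) = (\<Sum>k<N. if k = i then cnj (exp (\<i> * complex_of_real (\<phi> i))) * exp (\<i> * complex_of_real (\<phi>' i)) else 0)"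
      using i by (intro sum.cong) (auto simp: blockU_def)
    also have "\<dots> = cnj (exp (\<i> * complex_of_real (\<phi> i))) * exp (\<i> * complex_of_real (\<phi>' i))"
      using i by (simp add: sum_if_eq)
    finally show "(\<Sum>k<N+m. ?h i k) = cnj (exp (\<i> * complex_of_real (\<phi> i))) * exp (\<i> * complex_of_real (\<phi>' i))" by simp
  qed
  also have "(\<Sum>a<m. \<Sum>k<N+m. ?h (N+a) k) = (\<Sum>a<m. \<Sum>b<m. cnj (V b a) * V' b a)"
  proof (rule sum.cong[OF refl])
    fix a assume a: "a \<in> {..<m}"
    have "(\<Sum>k<N+m. ?h (N+a) k) = (\<Sum>k<N. ?h (N+a) k) + (\<Sum>b<m. ?h (N+a) (N+b))" by (rule sum_split_N)
    also have "(\<Sum>k<N. ?h (N+a) k) = 0" by (intro sum.neutral) (auto simp: blockU_def)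
    also have "(\<Sum>b<m. ?h (N+a) (N+b)) = (\<Sum>b<m. cnj (V b a) * V' b a)"
      using a by (intro sum.cong) (auto simp: blockU_def d)
    finally show "(\<Sum>k<N+m. ?h (N+a) k) = (\<Sum>b<m. cnj (V b a) * V' b a)" by simp
  qed
  also have "(\<Sum>a<m. \<Sum>b<m. cnj (V b a) * V' b a) = mtrace m (mmult m (madj m V) V')"
    unfolding tr_adj ..
  finally show ?thesis unfolding XN_def m_def by simp
qed

lemma space_matspace: "space matspace = UNIV"
  by (auto simp: matspace_def space_PiM PiE_def extensional_def)

theorem mainTheorem7:
  fixes d N :: nat and H :: "cmat measure"
  assumes "d \<ge> 2" and "N \<le> d" and "haar_unitary (d - N) H"
  shows "frame_potential2 d (RH_ensemble d N H) =
           (if N \<le> d - 2 then 2 * real N ^ 2 + 3 * real N + 2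
            else 2 * real d ^ 2 - real d)"
proof -
  define m where "m = d - N"
  have haar: "haar_unitary m H" using assms(3) m_def by simp
  have Nd: "N \<le> d" by fact
  interpret Hp: prob_space H by (rule H_prob[OF haar])
  interpret Pp: prob_space "Phi N" by (rule Phi_prob)
  define M where "M = Phi N \<Otimes>\<^sub>M H"
  interpret Mp: prob_space M unfolding M_def by (rule prob_space_pair) (rule Phi_prob, rule H_prob[OF haar])
  define bf where "bf = (\<lambda>(\<phi>, V). blockU d N \<phi> V)"
  have sH: "sets H = sets matspace" by (rule H_sets[OF haar])
  have comp: "(\<lambda>\<phi>. \<phi> i) \<in> borel_measurable (Phi N)" if "i < N" for i
    unfolding Phi_def using that
    by (intro measurable_component_singleton[where M="\<lambda>_. U", THEN measurable_compose]) (auto simp: sets_uniform_measure)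
  have bfm[measurable]: "bf \<in> measurable M matspace"
  proof (rule measurable_matspaceI)
    fix i j
    show "(\<lambda>x. bf x i j) \<in> borel_measurable M"
    proof (cases "i < N \<and> j < N")
      case True
      then have e: "(\<lambda>x. bf x i j) = (\<lambda>x. if i = j then exp (\<i> * complex_of_real (fst x i)) else 0)"
        by (auto simp: bf_def blockU_def split: prod.splits)
      have [measurable]: "(\<lambda>x. fst x i) \<in> borel_measurable M"
        unfolding M_def using True by (intro measurable_compose[OF measurable_fst comp]) auto
      show ?thesis unfolding e by measurable
    next
      case False
      show ?thesis
      proof (cases "N \<le> i \<and> i < d \<and> N \<le> j \<and> j < d")
        case True
        then have e: "(\<lambda>x. bf x i j) = (\<lambda>x. snd x (i - N) (j - N))"
          using False by (auto simp: bf_def blockU_def split: prod.splits)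
        have "(\<lambda>x. snd x (i - N) (j - N)) \<in> borel_measurable M"
          unfolding M_def by (intro measurable_compose[OF measurable_snd] H_measI[OF haar] meas_entry)
        then show ?thesis unfolding e .
      next
        case False2: False
        then have e: "(\<lambda>x. bf x i j) = (\<lambda>x. 0)"
          using False by (auto simp: bf_def blockU_def split: prod.splits)
        show ?thesis unfolding e by simp
      qed
    qed
  qed
  define g where "g p = cmod (mtrace d (mmult d (madj d (fst p)) (snd p))) ^ 4" for p :: "cmat \<times> cmat"
  have gm[measurable]: "g \<in> borel_measurable (matspace \<Otimes>\<^sub>M matspace)"
  proof -
    have [measurable]: "(\<lambda>p. fst p a b) \<in> borel_measurable (matspace \<Otimes>\<^sub>M matspace)" for a b :: nat
      by (intro measurable_compose[OF measurable_fst meas_entry])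
    have [measurable]: "(\<lambda>p. snd p a b) \<in> borel_measurable (matspace \<Otimes>\<^sub>M matspace)" for a b :: nat
      by (intro measurable_compose[OF measurable_snd meas_entry])
    show ?thesis unfolding g_def[abs_def] tr_adj by measurable
  qed
  have RH: "RH_ensemble d N H = distr M matspace bf"
    by (simp add: RH_ensemble_def M_def Phi_def bf_def)
  have sfd: "sigma_finite_measure (distr M matspace bf)"
    by (rule prob_space_imp_sigma_finite[OF Mp.prob_space_distr[OF bfm]])
  have Fm[measurable]: "(\<lambda>(x, y). (bf x, bf y)) \<in> measurable (M \<Otimes>\<^sub>M M) (matspace \<Otimes>\<^sub>M matspace)"
    by measurable
  have PD: "distr M matspace bf \<Otimes>\<^sub>M distr M matspace bf = distr (M \<Otimes>\<^sub>M M) (matspace \<Otimes>\<^sub>M matspace) (\<lambda>(x, y). (bf x, bf y))"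
    by (rule pair_measure_distr[OF bfm bfm sfd])
  define c0 where "c0 = 2 * real N ^ 2 - real N + 4 * s2v m * real N + s4v m"
  have s2n: "0 \<le> s2v m" and s4n: "0 \<le> s4v m" by (auto simp: s2v_def s4v_def)
  have c0n: "0 \<le> c0" unfolding c0_def using nat_sq_ge[of N] s2n s4n by simp
  have Gm0: "(\<lambda>p. g ((\<lambda>(x, y). (bf x, bf y)) p)) \<in> borel_measurable (M \<Otimes>\<^sub>M M)"
    by (rule measurable_compose[OF Fm gm])
  have Gm: "(\<lambda>p. ennreal (g ((\<lambda>(x, y). (bf x, bf y)) p))) \<in> borel_measurable (M \<Otimes>\<^sub>M M)"
    by (rule measurable_compose[OF Gm0 measurable_ennreal])
  have inner: "(\<integral>\<^sup>+y. ennreal (g (bf (\<phi>, V), bf y)) \<partial>M) = ennreal c0" if u: "unitary_mat m V" for \<phi> V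
  proof -
    let ?c = "\<lambda>j. cnj (exp (\<i> * complex_of_real (\<phi> j)))"
    have cn: "cmod (?c j) = 1" for j by simp
    have p1: "(\<lambda>y. (bf (\<phi>, V), bf y)) \<in> measurable M (matspace \<Otimes>\<^sub>M matspace)"
      by (rule measurable_Pair) (auto intro!: measurable_const bfm simp: space_matspace)
    have m1: "(\<lambda>y. ennreal (g (bf (\<phi>, V), bf y))) \<in> borel_measurable (Phi N \<Otimes>\<^sub>M H)"
      unfolding M_def[symmetric] by (rule measurable_compose[OF measurable_compose[OF p1 gm] measurable_ennreal])
    have "(\<integral>\<^sup>+y. ennreal (g (bf (\<phi>, V), bf y)) \<partial>M)
        = (\<integral>\<^sup>+\<phi>'. \<integral>\<^sup>+V'. ennreal (g (bf (\<phi>, V), bf (\<phi>', V'))) \<partial>H \<partial>Phi N)"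
      unfolding M_def by (rule Hp.nn_integral_fst[symmetric, OF m1])
    also have "\<dots> = (\<integral>\<^sup>+\<phi>'. \<integral>\<^sup>+V'. ennreal (cmod (XN N ?c \<phi>' + mtrace m (mmult m (madj m V) V')) ^ 4) \<partial>H \<partial>Phi N)"
      by (simp only: g_def bf_def fst_conv snd_conv prod.case blk_tr[OF Nd] m_def)
    also have "\<dots> = (\<integral>\<^sup>+\<phi>'. ennreal (cmod (XN N ?c \<phi>') ^ 4 + 4 * cmod (XN N ?c \<phi>') ^ 2 * s2v m + s4v m) \<partial>Phi N)"
      by (simp only: haar_quartic[OF haar u])
    also have "\<dots> = (\<integral>\<^sup>+\<phi>'. ennreal (cmod (XN N ?c \<phi>') ^ 4 + (4 * s2v m) * cmod (XN N ?c \<phi>') ^ 2 + s4v m) \<partial>Phi N)"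
      by (simp only: mult_ac)
    also have "\<dots> = (\<integral>\<^sup>+\<phi>'. ennreal (cmod (XN N ?c \<phi>') ^ 4) \<partial>Phi N) + ennreal (4 * s2v m) * (\<integral>\<^sup>+\<phi>'. ennreal (cmod (XN N ?c \<phi>') ^ 2) \<partial>Phi N) + ennreal (s4v m)"
      by (rule nn_poly[OF Phi_prob]) (use s2n s4n in auto)
    also have "\<dots> = ennreal (2 * real N ^ 2 - real N) + ennreal (4 * s2v m) * ennreal (real N) + ennreal (s4v m)"
      using phase_moments[OF cn, of N] by simp
    also have "\<dots> = ennreal c0"
    proof -
      have a0: "0 \<le> 2 * real N ^ 2 - real N" using nat_sq_ge[of N] by simp
      have m4: "ennreal (4 * s2v m) * ennreal (real N) = ennreal (4 * s2v m * real N)" using s2n by (simp add: ennreal_mult)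
      have q1: "ennreal (2 * real N ^ 2 - real N + 4 * s2v m * real N) = ennreal (2 * real N ^ 2 - real N) + ennreal (4 * s2v m * real N)"
        by (rule ennreal_plus) (use a0 s2n in auto)
      have q2: "ennreal (2 * real N ^ 2 - real N + 4 * s2v m * real N + s4v m) = ennreal (2 * real N ^ 2 - real N + 4 * s2v m * real N) + ennreal (s4v m)"
        by (rule ennreal_plus) (use a0 s2n s4n in auto)
      show ?thesis unfolding c0_def by (simp only: m4 q1 q2)
    qed
    finally show ?thesis .
  qed
  have hm: "(\<lambda>x. \<integral>\<^sup>+y. ennreal (g (bf x, bf y)) \<partial>M) \<in> borel_measurable M"
    using Mp.borel_measurable_nn_integral_fst[OF Gm] by (simp only: prod.case)
  have hm2: "(\<lambda>x. \<integral>\<^sup>+y. ennreal (g (bf x, bf y)) \<partial>M) \<in> borel_measurable (Phi N \<Otimes>\<^sub>M H)"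
    using hm unfolding M_def .
  have outer: "(\<integral>\<^sup>+x. \<integral>\<^sup>+y. ennreal (g (bf x, bf y)) \<partial>M \<partial>M) = ennreal c0"
  proof -
    have "(\<integral>\<^sup>+x. \<integral>\<^sup>+y. ennreal (g (bf x, bf y)) \<partial>M \<partial>M)
        = (\<integral>\<^sup>+\<phi>. \<integral>\<^sup>+V. (\<integral>\<^sup>+y. ennreal (g (bf (\<phi>, V), bf y)) \<partial>M) \<partial>H \<partial>Phi N)"
      using Hp.nn_integral_fst[OF hm2] by (simp only: M_def[symmetric])
    also have "\<dots> = (\<integral>\<^sup>+\<phi>. \<integral>\<^sup>+V. ennreal c0 \<partial>H \<partial>Phi N)"
    proof (rule nn_integral_cong)
      fix \<phi>
      show "(\<integral>\<^sup>+V. (\<integral>\<^sup>+y. ennreal (g (bf (\<phi>, V), bf y)) \<partial>M) \<partial>H) = (\<integral>\<^sup>+V. ennreal c0 \<partial>H)"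
        using H_AE[OF haar] by (intro nn_integral_cong_AE) (auto elim: AE_mp intro: inner)
    qed
    also have "\<dots> = ennreal c0" by (simp add: Hp.emeasure_space_1 Pp.emeasure_space_1)
    finally show ?thesis .
  qed
  have "frame_potential2 d (RH_ensemble d N H) = integral\<^sup>L (distr (M \<Otimes>\<^sub>M M) (matspace \<Otimes>\<^sub>M matspace) (\<lambda>(x, y). (bf x, bf y))) g"
    unfolding frame_potential2_def RH PD g_def ..
  also have "\<dots> = enn2real (\<integral>\<^sup>+p. ennreal (g p) \<partial>distr (M \<Otimes>\<^sub>M M) (matspace \<Otimes>\<^sub>M matspace) (\<lambda>(x, y). (bf x, bf y)))"
    by (rule integral_eq_nn_integral) (use gm in simp, simp add: g_def)
  also have "(\<integral>\<^sup>+p. ennreal (g p) \<partial>distr (M \<Otimes>\<^sub>M M) (matspace \<Otimes>\<^sub>M matspace) (\<lambda>(x, y). (bf x, bf y)))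
      = (\<integral>\<^sup>+p. ennreal (g ((\<lambda>(x, y). (bf x, bf y)) p)) \<partial>(M \<Otimes>\<^sub>M M))"
    by (rule nn_integral_distr[OF Fm]) (use measurable_compose[OF gm measurable_ennreal] in simp)
  also have "\<dots> = (\<integral>\<^sup>+x. \<integral>\<^sup>+y. ennreal (g (bf x, bf y)) \<partial>M \<partial>M)"
    using Mp.nn_integral_fst[OF Gm] by (simp only: prod.case)
  also have "\<dots> = ennreal c0" by (rule outer)
  finally have FP: "frame_potential2 d (RH_ensemble d N H) = c0" using c0n by simp
  show ?thesis
  proof (cases "N \<le> d - 2")
    case True
    then have "2 \<le> m" using assms(1) unfolding m_def by linarith
    then have "s2v m = 1" "s4v m = 2" by (auto simp: s2v_def s4v_def)
    then show ?thesis using FP True by (simp add: c0_def algebra_simps)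
  next
    case False
    then have "m = 0 \<or> m = 1" using assms(1) Nd unfolding m_def by linarith
    then show ?thesis
    proof
      assume m0: "m = 0"
      then have "N = d" using Nd unfolding m_def by simp
      then show ?thesis using FP False m0 by (simp add: c0_def s2v_def s4v_def)
    next
      assume m1: "m = 1"
      then have rd: "real d = real N + 1" using Nd unfolding m_def by simp
      show ?thesis using FP False m1 by (simp add: c0_def s2v_def s4v_def rd power2_eq_square algebra_simps)
    qed
  qed
qed

end
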